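(* Let $p\ge1$, $m=2p$, $N>M\ge0$, let $\beta(0),\dots,\beta(N)$ be $p\times m$ matrices with $\beta(k)J\beta(k)^*=I_p$, put $C_k=2K^*\beta(k)^*\beta(k)K-j$, and consider the system $W_{k+1}(\lambda)-W_k(\lambda)=-\frac{i}{\lambda}jC_kW_k(\lambda)$, $W_0=I_m$. Then $\mathcal N(N)\subset\mathcal N(M)$.
   Context: $\mathbb C_-$ is the open lower half-plane; $j=\mathrm{diag}(I_p,-I_p)$, $J=\begin{bmatrix}0&I_p\\ I_p&0\end{bmatrix}$, $K=\frac1{\sqrt2}\begin{bmatrix}I_p&-I_p\\ I_p&I_p\end{bmatrix}$. For $L\le N$ let $\mathcal W(L,\lambda)=\{\mathcal W_{ij}(L,\lambda)\}_{i,j=1}^2=KW_{L+1}(\bar\lambda)^*$ ($p\times p$ blocks), and let $\mathcal N(L)$ be the set of $p\times p$ matrix functions $\varphi$ holomorphic in $\mathbb C_-$ of the form $\varphi=i(\mathcal W_{21}(L,\cdot)R+\mathcal W_{22}(L,\cdot)Q)(\mathcal W_{11}(L,\cdot)R+\mathcal W_{12}(L,\cdot)Q)^{-1}$, where $R,Q$ are $p\times p$ matrix functions meromorphic in $\mathbb C_-$, well defined at $\lambda=-i$, with $R^*R+Q^*Q>0$ and $R^*R\le Q^*Q$ (Weyl functions on the interval $0\le k\le L$). *)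

theory Defs
  imports "HOL-Complex_Analysis.Complex_Analysis" "Jordan_Normal_Form.Schur_Decomposition"
begin

definition lower_half_plane :: "complex set" where
  "lower_half_plane = {z. Im z < 0}"

definition jmat :: "nat \<Rightarrow> complex mat" where
  "jmat p = mat (2*p) (2*p) (\<lambda>(a,b). if a = b then (if a < p then 1 else -1) else 0)"

definition Jmat :: "nat \<Rightarrow> complex mat" where
  "Jmat p = mat (2*p) (2*p) (\<lambda>(a,b). if b = a + p \<or> a = b + p then 1 else 0)"

definition Kmat :: "nat \<Rightarrow> complex mat" where
  "Kmat p = mat (2*p) (2*p) (\<lambda>(a,b).
     complex_of_real (1 / sqrt 2) *
       (if a = b then 1 else if b = a + p then -1 else if a = b + p then 1 else 0))"

definition Cmat :: "nat \<Rightarrow> (nat \<Rightarrow> complex mat) \<Rightarrow> nat \<Rightarrow> complex mat" where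
  "Cmat p \<beta> k = (2::complex) \<cdot>\<^sub>m (mat_adjoint (Kmat p) * mat_adjoint (\<beta> k) * \<beta> k * Kmat p) - jmat p"

fun Wsol :: "nat \<Rightarrow> (nat \<Rightarrow> complex mat) \<Rightarrow> nat \<Rightarrow> complex \<Rightarrow> complex mat" where
  "Wsol p \<beta> 0 z = 1\<^sub>m (2*p)"
| "Wsol p \<beta> (Suc k) z =
     Wsol p \<beta> k z + (- \<i> / z) \<cdot>\<^sub>m (jmat p * Cmat p \<beta> k * Wsol p \<beta> k z)"

definition WW :: "nat \<Rightarrow> (nat \<Rightarrow> complex mat) \<Rightarrow> nat \<Rightarrow> complex \<Rightarrow> complex mat" where
  "WW p \<beta> L z = Kmat p * mat_adjoint (Wsol p \<beta> (Suc L) (cnj z))"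

definition WWblock :: "nat \<Rightarrow> (nat \<Rightarrow> complex mat) \<Rightarrow> nat \<Rightarrow> nat \<Rightarrow> nat \<Rightarrow> complex \<Rightarrow> complex mat" where
  "WWblock p \<beta> L a b z =
     mat p p (\<lambda>(r,c). WW p \<beta> L z $$ (r + (a - 1) * p, c + (b - 1) * p))"

definition pos_def_mat :: "nat \<Rightarrow> complex mat \<Rightarrow> bool" where
  "pos_def_mat n A \<longleftrightarrow> A \<in> carrier_mat n n \<and> mat_adjoint A = A \<and>
     (\<forall>v \<in> carrier_vec n. v \<noteq> 0\<^sub>v n \<longrightarrow> Re (conjugate v \<bullet> (A *\<^sub>v v)) > 0)"

definition pos_semidef_mat :: "nat \<Rightarrow> complex mat \<Rightarrow> bool" where
  "pos_semidef_mat n A \<longleftrightarrow> A \<in> carrier_mat n n \<and> mat_adjoint A = A \<and>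
     (\<forall>v \<in> carrier_vec n. Re (conjugate v \<bullet> (A *\<^sub>v v)) \<ge> 0)"

text \<open>A p x p matrix function meromorphic in S (entrywise; represented "nicely", i.e. without
  removable singularities), and the points where it is well defined (no entry has a pole).\<close>
definition mat_meromorphic_on :: "nat \<Rightarrow> (complex \<Rightarrow> complex mat) \<Rightarrow> complex set \<Rightarrow> bool" where
  "mat_meromorphic_on n F S \<longleftrightarrow> (\<forall>z\<in>S. F z \<in> carrier_mat n n) \<and>
     (\<forall>a<n. \<forall>b<n. (\<lambda>z. F z $$ (a,b)) nicely_meromorphic_on S)"

definition mat_defined_at :: "nat \<Rightarrow> (complex \<Rightarrow> complex mat) \<Rightarrow> complex \<Rightarrow> bool" where
  "mat_defined_at n F z \<longleftrightarrow> (\<forall>a<n. \<forall>b<n. \<not> is_pole (\<lambda>w. F w $$ (a,b)) z)"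

definition mat_holomorphic_on :: "nat \<Rightarrow> (complex \<Rightarrow> complex mat) \<Rightarrow> complex set \<Rightarrow> bool" where
  "mat_holomorphic_on n F S \<longleftrightarrow> (\<forall>z\<in>S. F z \<in> carrier_mat n n) \<and>
     (\<forall>a<n. \<forall>b<n. (\<lambda>z. F z $$ (a,b)) holomorphic_on S)"

definition WeylSet :: "nat \<Rightarrow> (nat \<Rightarrow> complex mat) \<Rightarrow> nat \<Rightarrow> (complex \<Rightarrow> complex mat) set" where
  "WeylSet p \<beta> L = {\<phi>. mat_holomorphic_on p \<phi> lower_half_plane \<and>
     (\<exists>R Q. mat_meromorphic_on p R lower_half_plane \<and> mat_meromorphic_on p Q lower_half_plane \<and>
        mat_defined_at p R (-\<i>) \<and> mat_defined_at p Q (-\<i>) \<and>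
        (\<forall>z\<in>lower_half_plane. mat_defined_at p R z \<and> mat_defined_at p Q z \<longrightarrow>
            pos_def_mat p (mat_adjoint (R z) * R z + mat_adjoint (Q z) * Q z) \<and>
            pos_semidef_mat p (mat_adjoint (Q z) * Q z - mat_adjoint (R z) * R z)) \<and>
        (\<forall>\<^sub>\<approx>z\<in>lower_half_plane.
            invertible_mat (WWblock p \<beta> L 1 1 z * R z + WWblock p \<beta> L 1 2 z * Q z) \<and>
            \<phi> z = \<i> \<cdot>\<^sub>m (WWblock p \<beta> L 2 1 z * R z + WWblock p \<beta> L 2 2 z * Q z) *
                   the (mat_inverse (WWblock p \<beta> L 1 1 z * R z + WWblock p \<beta> L 1 2 z * Q z))))}"

end

theory Submission
  imports Defs
begin

lemma adj_dims[simp]: "dim_row (mat_adjoint A) = dim_col A" "dim_col (mat_adjoint A) = dim_row A"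
  unfolding mat_adjoint_def by simp_all

lemma adj_index[simp]: "i < dim_col A \<Longrightarrow> j < dim_row A \<Longrightarrow>
   mat_adjoint (A::complex mat) $$ (i,j) = cnj (A $$ (j,i))"
  unfolding mat_adjoint_def by (simp add: mat_of_rows_def)

lemma adj_carrier[simp]: "A \<in> carrier_mat n m \<Longrightarrow> mat_adjoint A \<in> carrier_mat m n"
  unfolding carrier_mat_def by simp

lemma adj_adj[simp]: "mat_adjoint (mat_adjoint (A::complex mat)) = A"
  by (rule eq_matI) auto

lemma adj_mult:
  assumes "(A::complex mat) \<in> carrier_mat n m" "B \<in> carrier_mat m k"
  shows "mat_adjoint (A*B) = mat_adjoint B * mat_adjoint A"
proof (rule eq_matI)
  fix i j assume ij: "i < dim_row (mat_adjoint B * mat_adjoint A)" "j < dim_col (mat_adjoint B * mat_adjoint A)"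
  hence i: "i < k" and j: "j < n" using assms by auto
  have "mat_adjoint (A*B) $$ (i,j) = cnj (\<Sum>l<m. A $$ (j,l) * B $$ (l,i))"
    using assms i j by (simp add: scalar_prod_def atLeast0LessThan)
  also have "\<dots> = (\<Sum>l<m. cnj (B $$ (l,i)) * cnj (A $$ (j,l)))"
    by (simp add: mult.commute)
  also have "\<dots> = (mat_adjoint B * mat_adjoint A) $$ (i,j)"
    using assms i j by (simp add: scalar_prod_def atLeast0LessThan)
  finally show "mat_adjoint (A*B) $$ (i,j) = (mat_adjoint B * mat_adjoint A) $$ (i,j)" .
qed (use assms in simp_all)

lemma adj_add:
  assumes "(A::complex mat) \<in> carrier_mat n m" "B \<in> carrier_mat n m"
  shows "mat_adjoint (A+B) = mat_adjoint A + mat_adjoint B"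
  using assms by (intro eq_matI) simp_all

lemma adj_minus:
  assumes "(A::complex mat) \<in> carrier_mat n m" "B \<in> carrier_mat n m"
  shows "mat_adjoint (A-B) = mat_adjoint A - mat_adjoint B"
  using assms by (intro eq_matI) simp_all

lemma adj_smult: "mat_adjoint (c \<cdot>\<^sub>m (A::complex mat)) = cnj c \<cdot>\<^sub>m mat_adjoint A"
  by (intro eq_matI) simp_all

lemma adj_one[simp]: "mat_adjoint (1\<^sub>m n :: complex mat) = 1\<^sub>m n"
  by (intro eq_matI) simp_all

lemma sum2: "(\<Sum>l<2*p. f l) = (\<Sum>l<p. f l) + (\<Sum>l<p. f (l+p))" for f :: "nat \<Rightarrow> 'a::comm_monoid_add"
proof -
  have "(\<Sum>l<2*p. f l) = (\<Sum>l\<in>{0..<p}. f l) + (\<Sum>l\<in>{p..<2*p}. f l)"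
    by (simp add: atLeast0LessThan[symmetric] sum.atLeastLessThan_concat)
  also have "(\<Sum>l\<in>{p..<2*p}. f l) = (\<Sum>l\<in>{0..<p}. f (l+p))"
    using sum.shift_bounds_nat_ivl[of f 0 p p] by (simp add: mult_2)
  finally show ?thesis by (simp add: atLeast0LessThan)
qed

lemma idx_cases: "(r::nat) < 2*p \<Longrightarrow> (r < p \<Longrightarrow> P r) \<Longrightarrow> (\<And>r'. r' < p \<Longrightarrow> P (r'+p)) \<Longrightarrow> P r"
  by (metis add.commute le_add_diff_inverse2 less_diff_conv2 mult_2 not_less)

lemma j_carrier[simp,intro]: "jmat p \<in> carrier_mat (2*p) (2*p)"
  and K_carrier[simp,intro]: "Kmat p \<in> carrier_mat (2*p) (2*p)"
  and J_carrier[simp,intro]: "Jmat p \<in> carrier_mat (2*p) (2*p)"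
  by (simp_all add: jmat_def Kmat_def Jmat_def)

lemma j_dims[simp]: "dim_row (jmat p) = 2*p" "dim_col (jmat p) = 2*p"
  "dim_row (Kmat p) = 2*p" "dim_col (Kmat p) = 2*p"
  "dim_row (Jmat p) = 2*p" "dim_col (Jmat p) = 2*p"
  by (simp_all add: jmat_def Kmat_def Jmat_def)

definition cK :: complex where "cK = complex_of_real (1 / sqrt 2)"

lemma cK_sq: "cK * cK = 1/2"
proof -
  have "(1/sqrt 2) * (1/sqrt 2) = (1/2::real)" by (simp add: real_sqrt_mult[symmetric])
  hence "complex_of_real ((1/sqrt 2) * (1/sqrt 2)) = 1/2" by simp
  thus ?thesis unfolding cK_def by (simp only: of_real_mult)
qed

lemma cnj_cK[simp]: "cnj cK = cK" unfolding cK_def by simp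

lemma K_idx[simp]:
  assumes "a < p" "l < p"
  shows "Kmat p $$ (a,l) = (if l = a then cK else 0)"
    "Kmat p $$ (a,l+p) = (if l = a then -cK else 0)"
    "Kmat p $$ (a+p,l) = (if l = a then cK else 0)"
    "Kmat p $$ (a+p,l+p) = (if l = a then cK else 0)"
  using assms by (auto simp: Kmat_def cK_def)

lemma j_idx[simp]:
  assumes "a < p" "l < p"
  shows "jmat p $$ (a,l) = (if l = a then 1 else 0)"
    "jmat p $$ (a,l+p) = 0"
    "jmat p $$ (a+p,l) = 0"
    "jmat p $$ (a+p,l+p) = (if l = a then -1 else 0)"
  using assms by (auto simp: jmat_def)

lemma J_idx[simp]:
  assumes "a < p" "l < p"
  shows "Jmat p $$ (a,l) = 0"
    "Jmat p $$ (a,l+p) = (if l = a then 1 else 0)"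
    "Jmat p $$ (a+p,l) = (if l = a then 1 else 0)"
    "Jmat p $$ (a+p,l+p) = 0"
  using assms by (auto simp: Jmat_def)

lemma mult_idx2: "A \<in> carrier_mat n (2*p) \<Longrightarrow> B \<in> carrier_mat (2*p) m \<Longrightarrow> i < n \<Longrightarrow> k < m \<Longrightarrow>
  (A * B) $$ (i,k) = (\<Sum>l<p. A $$ (i,l) * B $$ (l,k)) + (\<Sum>l<p. A $$ (i,l+p) * B $$ (l+p,k))"
  using sum2[of "\<lambda>l. A $$ (i,l) * B $$ (l,k)" p] by (simp add: scalar_prod_def atLeast0LessThan)

lemma adj_j: "mat_adjoint (jmat p) = jmat p"
  by (intro eq_matI) (auto simp: jmat_def)

lemma jj: "jmat p * jmat p = 1\<^sub>m (2*p)"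
proof (rule eq_matI)
  fix i k assume "i < dim_row (1\<^sub>m (2*p) :: complex mat)" "k < dim_col (1\<^sub>m (2*p) :: complex mat)"
  hence i: "i < 2*p" and k: "k < 2*p" by auto
  show "(jmat p * jmat p) $$ (i,k) = 1\<^sub>m (2*p) $$ (i,k)"
    apply (subst mult_idx2[where n="2*p" and m="2*p"])
    using i k apply auto[4]
    apply (rule idx_cases[OF i]; rule idx_cases[OF k])
    by (auto simp: if_distrib cong: if_cong)
qed auto

lemma KjK: "Kmat p * jmat p * mat_adjoint (Kmat p) = Jmat p"
proof (rule eq_matI)
  fix i k assume "i < dim_row (Jmat p)" "k < dim_col (Jmat p)"
  hence i: "i < 2*p" and k: "k < 2*p" by auto
  have Kj: "Kmat p * jmat p \<in> carrier_mat (2*p) (2*p)" by auto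
  have e: "(Kmat p * jmat p) $$ (a,b) = Kmat p $$ (a,b) * (if b < p then 1 else -1)" if "a < 2*p" "b < 2*p" for a b
    apply (subst mult_idx2[where n="2*p" and m="2*p"])
    using that apply auto[4]
    apply (rule idx_cases[OF that(1)]; rule idx_cases[OF that(2)])
    by (auto simp: if_distrib cong: if_cong)
  have e2: "(Kmat p * jmat p) $$ (a,l) = (if l = a then cK else 0)"
     "(Kmat p * jmat p) $$ (a,l+p) = (if l = a then cK else 0)"
     "(Kmat p * jmat p) $$ (a+p,l) = (if l = a then cK else 0)"
     "(Kmat p * jmat p) $$ (a+p,l+p) = (if l = a then -cK else 0)" if "a < p" "l < p" for a l
    using that by (subst e; simp)+
  show "(Kmat p * jmat p * mat_adjoint (Kmat p)) $$ (i,k) = Jmat p $$ (i,k)"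
    apply (subst mult_idx2[where n="2*p" and m="2*p"])
    using i k apply auto[4]
    apply (rule idx_cases[OF i]; rule idx_cases[OF k])
    by (auto simp del: index_mult_mat simp: e2 if_distrib cK_sq cong: if_cong)
qed auto

definition um :: "nat \<Rightarrow> complex mat \<Rightarrow> complex mat" where "um p b = b * Kmat p"

lemma um_carrier[simp]: "b \<in> carrier_mat p (2*p) \<Longrightarrow> um p b \<in> carrier_mat p (2*p)"
  unfolding um_def by (rule mult_carrier_mat[OF _ K_carrier])

lemma adj_um: "b \<in> carrier_mat p (2*p) \<Longrightarrow> mat_adjoint (um p b) = mat_adjoint (Kmat p) * mat_adjoint b"
  unfolding um_def by (rule adj_mult[OF _ K_carrier])

lemma Gm_eq: assumes b: "b \<in> carrier_mat p (2*p)"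
  shows "mat_adjoint (Kmat p) * mat_adjoint b * b * Kmat p = mat_adjoint (um p b) * um p b"
proof -
  have c: "mat_adjoint (Kmat p) * mat_adjoint b \<in> carrier_mat (2*p) p"
    using b by (intro mult_carrier_mat[OF adj_carrier[OF K_carrier]]) simp
  show ?thesis unfolding adj_um[OF b] unfolding um_def
    by (rule assoc_mult_mat[OF c b K_carrier])
qed

lemma uju: assumes b: "b \<in> carrier_mat p (2*p)" and bJ: "b * Jmat p * mat_adjoint b = 1\<^sub>m p"
  shows "um p b * jmat p * mat_adjoint (um p b) = 1\<^sub>m p"
proof -
  have K: "Kmat p \<in> carrier_mat (2*p) (2*p)" "jmat p \<in> carrier_mat (2*p) (2*p)"
    "mat_adjoint (Kmat p) \<in> carrier_mat (2*p) (2*p)" "mat_adjoint b \<in> carrier_mat (2*p) p" using b by simp_all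
  have Kj: "Kmat p * jmat p \<in> carrier_mat (2*p) (2*p)" using K by (intro mult_carrier_mat) 
  have Ka: "mat_adjoint (Kmat p) * mat_adjoint b \<in> carrier_mat (2*p) p" using K by (intro mult_carrier_mat) 
  have KjKc: "Kmat p * jmat p * mat_adjoint (Kmat p) \<in> carrier_mat (2*p) (2*p)" using Kj K by (intro mult_carrier_mat)
  have "um p b * jmat p * mat_adjoint (um p b) = b * Kmat p * jmat p * (mat_adjoint (Kmat p) * mat_adjoint b)"
    using adj_um[OF b] unfolding um_def by (rule arg_cong)
  also have "\<dots> = b * (Kmat p * jmat p * mat_adjoint (Kmat p)) * mat_adjoint b"
  proof -
    have "b * Kmat p * jmat p = b * (Kmat p * jmat p)" by (rule assoc_mult_mat[OF b K(1,2)])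
    moreover have "b * (Kmat p * jmat p) * (mat_adjoint (Kmat p) * mat_adjoint b) = b * ((Kmat p * jmat p) * (mat_adjoint (Kmat p) * mat_adjoint b))"
      by (rule assoc_mult_mat[OF b Kj Ka])
    moreover have "(Kmat p * jmat p) * (mat_adjoint (Kmat p) * mat_adjoint b) = (Kmat p * jmat p * mat_adjoint (Kmat p)) * mat_adjoint b"
      by (rule assoc_mult_mat[OF Kj K(3,4), symmetric])
    moreover have "b * ((Kmat p * jmat p * mat_adjoint (Kmat p)) * mat_adjoint b) = b * (Kmat p * jmat p * mat_adjoint (Kmat p)) * mat_adjoint b"
      by (rule assoc_mult_mat[OF b KjKc K(4), symmetric])
    ultimately show ?thesis by simp
  qed
  also have "\<dots> = 1\<^sub>m p" unfolding KjK by (rule bJ)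
  finally show ?thesis .
qed

lemma Cmat_eq: assumes b: "\<beta> k \<in> carrier_mat p (2*p)"
  shows "Cmat p \<beta> k = 2 \<cdot>\<^sub>m (mat_adjoint (um p (\<beta> k)) * um p (\<beta> k)) - jmat p"
  unfolding Cmat_def Gm_eq[OF b] ..

lemma Cmat_carrier[simp]: "Cmat p \<beta> k \<in> carrier_mat (2*p) (2*p)"
  unfolding Cmat_def carrier_mat_def by simp

lemma Cmat_herm: assumes b: "\<beta> k \<in> carrier_mat p (2*p)"
  shows "mat_adjoint (Cmat p \<beta> k) = Cmat p \<beta> k"
proof -
  let ?u = "um p (\<beta> k)"
  have u: "?u \<in> carrier_mat p (2*p)" using b by simp
  have uu: "mat_adjoint ?u * ?u \<in> carrier_mat (2*p) (2*p)" using u by (intro mult_carrier_mat[of _ _ p]) simp_all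
  have "mat_adjoint (mat_adjoint ?u * ?u) = mat_adjoint ?u * ?u"
    using u by (subst adj_mult[of _ "2*p" p]) simp_all
  thus ?thesis unfolding Cmat_eq[of \<beta> k p, OF b]
    by (subst adj_minus[of _ "2*p" "2*p"]) (use uu in \<open>simp_all add: adj_smult adj_j\<close>)
qed



definition ipr :: "complex vec \<Rightarrow> complex vec \<Rightarrow> complex" where "ipr x y = conjugate x \<bullet> y"

lemma ipr_sum: assumes "dim_vec x = n" "dim_vec y = n" shows "ipr x y = (\<Sum>i<n. cnj (x $ i) * y $ i)"
  unfolding ipr_def scalar_prod_def atLeast0LessThan
  by (rule sum.cong) (use assms in simp_all)

lemma ipr_add1: assumes "x \<in> carrier_vec n" "y \<in> carrier_vec n" "z \<in> carrier_vec n"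
  shows "ipr (x + y) z = ipr x z + ipr y z"
proof -
  have d: "dim_vec x = n" "dim_vec y = n" "dim_vec z = n" "dim_vec (x+y) = n" using assms by auto
  show ?thesis unfolding ipr_sum[OF d(4,3)] ipr_sum[OF d(1,3)] ipr_sum[OF d(2,3)] sum.distrib[symmetric]
    by (rule sum.cong) (use d in \<open>simp_all add: distrib_right\<close>)
qed

lemma ipr_add2: assumes "x \<in> carrier_vec n" "y \<in> carrier_vec n" "z \<in> carrier_vec n"
  shows "ipr x (y + z) = ipr x y + ipr x z"
proof -
  have d: "dim_vec x = n" "dim_vec y = n" "dim_vec z = n" "dim_vec (y+z) = n" using assms by auto
  show ?thesis unfolding ipr_sum[OF d(1,4)] ipr_sum[OF d(1,2)] ipr_sum[OF d(1,3)] sum.distrib[symmetric]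
    by (rule sum.cong) (use d in \<open>simp_all add: distrib_left\<close>)
qed

lemma ipr_minus1: assumes "x \<in> carrier_vec n" "y \<in> carrier_vec n" "z \<in> carrier_vec n"
  shows "ipr (x - y) z = ipr x z - ipr y z"
proof -
  have d: "dim_vec x = n" "dim_vec y = n" "dim_vec z = n" "dim_vec (x-y) = n" using assms by auto
  show ?thesis unfolding ipr_sum[OF d(4,3)] ipr_sum[OF d(1,3)] ipr_sum[OF d(2,3)] sum_subtractf[symmetric]
    by (rule sum.cong) (use d in \<open>simp_all add: left_diff_distrib\<close>)
qed

lemma ipr_minus2: assumes "x \<in> carrier_vec n" "y \<in> carrier_vec n" "z \<in> carrier_vec n"
  shows "ipr x (y - z) = ipr x y - ipr x z"
proof -
  have d: "dim_vec x = n" "dim_vec y = n" "dim_vec z = n" "dim_vec (y-z) = n" using assms by auto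
  show ?thesis unfolding ipr_sum[OF d(1,4)] ipr_sum[OF d(1,2)] ipr_sum[OF d(1,3)] sum_subtractf[symmetric]
    by (rule sum.cong) (use d in \<open>simp_all add: right_diff_distrib\<close>)
qed

lemma ipr_smult1: assumes "x \<in> carrier_vec n" "z \<in> carrier_vec n"
  shows "ipr (c \<cdot>\<^sub>v x) z = cnj c * ipr x z"
proof -
  have d: "dim_vec x = n" "dim_vec z = n" "dim_vec (c \<cdot>\<^sub>v x) = n" using assms by auto
  show ?thesis unfolding ipr_sum[OF d(3,2)] ipr_sum[OF d(1,2)] sum_distrib_left
    by (rule sum.cong) (use d in \<open>simp_all add: mult.assoc\<close>)
qed

lemma ipr_smult2: assumes "x \<in> carrier_vec n" "z \<in> carrier_vec n"
  shows "ipr x (c \<cdot>\<^sub>v z) = c * ipr x z"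
proof -
  have d: "dim_vec x = n" "dim_vec z = n" "dim_vec (c \<cdot>\<^sub>v z) = n" using assms by auto
  show ?thesis unfolding ipr_sum[OF d(1,3)] ipr_sum[OF d(1,2)] sum_distrib_left
    by (rule sum.cong) (use d in \<open>simp_all add: mult.left_commute\<close>)
qed

lemma ipr_sym: assumes "x \<in> carrier_vec n" "y \<in> carrier_vec n"
  shows "ipr x y = cnj (ipr y x)"
proof -
  have d: "dim_vec x = n" "dim_vec y = n" using assms by auto
  show ?thesis unfolding ipr_sum[OF d(1,2)] ipr_sum[OF d(2,1)]
    by (simp add: mult.commute)
qed

lemma ipr_adj: assumes A: "A \<in> carrier_mat n m" and x: "x \<in> carrier_vec n" and y: "y \<in> carrier_vec m"
  shows "ipr x (A *\<^sub>v y) = ipr (mat_adjoint A *\<^sub>v x) y"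
proof -
  have d: "dim_vec x = n" "dim_vec y = m" "dim_vec (A *\<^sub>v y) = n" "dim_vec (mat_adjoint A *\<^sub>v x) = m"
    "dim_row A = n" "dim_col A = m" using A x y by auto
  have "ipr x (A *\<^sub>v y) = (\<Sum>i<n. cnj (x $ i) * (\<Sum>k<m. A $$ (i,k) * y $ k))"
    unfolding ipr_sum[OF d(1,3)]
    by (rule sum.cong) (use d in \<open>simp_all add: scalar_prod_def atLeast0LessThan\<close>)
  also have "\<dots> = (\<Sum>k<m. (\<Sum>i<n. cnj (x $ i) * A $$ (i,k)) * y $ k)"
    by (simp add: sum_distrib_left sum_distrib_right mult.assoc) (rule sum.swap)
  also have "\<dots> = ipr (mat_adjoint A *\<^sub>v x) y"
    unfolding ipr_sum[OF d(4,2)]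
    by (rule sum.cong) (use d in \<open>simp_all add: scalar_prod_def atLeast0LessThan mult.commute\<close>)
  finally show ?thesis .
qed

lemma ipr_self: assumes "dim_vec x = n" shows "ipr x x = of_real (\<Sum>i<n. (cmod (x $ i))^2)"
  unfolding ipr_sum[OF assms assms] of_real_sum
  by (rule sum.cong) (simp_all only: complex_norm_square mult.commute)

lemma ipr_self_ge: "Re (ipr x x) \<ge> 0"
  unfolding ipr_self[OF refl] by (simp add: sum_nonneg)

lemma ipr_self_real: "ipr x x = of_real (Re (ipr x x))"
  unfolding ipr_self[OF refl] by simp

lemma ipr_self_zero: assumes "Re (ipr x x) = 0" shows "x = 0\<^sub>v (dim_vec x)"
proof (rule eq_vecI)
  fix i assume i: "i < dim_vec (0\<^sub>v (dim_vec x) :: complex vec)"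
  have "(\<Sum>i<dim_vec x. (cmod (x $ i))^2) = 0" using assms
    unfolding ipr_self[OF refl] by simp
  hence "\<forall>i\<in>{..<dim_vec x}. (cmod (x $ i))^2 = 0"
    by (subst sum_nonneg_eq_0_iff[symmetric]) simp_all
  thus "x $ i = 0\<^sub>v (dim_vec x) $ i" using i by simp
qed simp

lemma smult_mat_vec: assumes "A \<in> carrier_mat n m" "x \<in> carrier_vec m"
  shows "(c \<cdot>\<^sub>m A) *\<^sub>v x = c \<cdot>\<^sub>v (A *\<^sub>v x)"
proof (rule eq_vecI)
  fix i assume "i < dim_vec (c \<cdot>\<^sub>v (A *\<^sub>v x))"
  hence i: "i < n" using assms by simp
  show "((c \<cdot>\<^sub>m A) *\<^sub>v x) $ i = (c \<cdot>\<^sub>v (A *\<^sub>v x)) $ i"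
    using assms i by (simp add: scalar_prod_def sum_distrib_left mult.assoc)
qed (use assms in simp)

definition Bmat :: "nat \<Rightarrow> (nat \<Rightarrow> complex mat) \<Rightarrow> nat \<Rightarrow> complex \<Rightarrow> complex mat" where
  "Bmat p \<beta> k z = 1\<^sub>m (2*p) + (\<i>/z) \<cdot>\<^sub>m (Cmat p \<beta> k * jmat p)"

definition Bimat :: "nat \<Rightarrow> (nat \<Rightarrow> complex mat) \<Rightarrow> nat \<Rightarrow> complex \<Rightarrow> complex mat" where
  "Bimat p \<beta> k z = 1\<^sub>m (2*p) - (\<i>/z) \<cdot>\<^sub>m (Cmat p \<beta> k * jmat p)"

lemma Cj_carrier[simp]: "Cmat p \<beta> k * jmat p \<in> carrier_mat (2*p) (2*p)"
  by (rule mult_carrier_mat[OF Cmat_carrier j_carrier])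

lemma Bmat_carrier[simp]: "Bmat p \<beta> k z \<in> carrier_mat (2*p) (2*p)"
  unfolding Bmat_def by (rule add_carrier_mat) (rule smult_carrier_mat[OF Cj_carrier])

lemma Bimat_carrier[simp]: "Bimat p \<beta> k z \<in> carrier_mat (2*p) (2*p)"
  unfolding Bimat_def by (rule minus_carrier_mat) (rule smult_carrier_mat[OF Cj_carrier])

lemma jv_carrier[simp]: "x \<in> carrier_vec (2*p) \<Longrightarrow> jmat p *\<^sub>v x \<in> carrier_vec (2*p)"
  by (rule mult_mat_vec_carrier[OF j_carrier])

lemma uv_carrier[simp]: "\<beta> k \<in> carrier_mat p (2*p) \<Longrightarrow> x \<in> carrier_vec (2*p) \<Longrightarrow> um p (\<beta> k) *\<^sub>v x \<in> carrier_vec p"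
  by (rule mult_mat_vec_carrier[OF um_carrier])

lemma auv_carrier[simp]: "\<beta> k \<in> carrier_mat p (2*p) \<Longrightarrow> y \<in> carrier_vec p \<Longrightarrow> mat_adjoint (um p (\<beta> k)) *\<^sub>v y \<in> carrier_vec (2*p)"
  by (rule mult_mat_vec_carrier[OF adj_carrier[OF um_carrier]])

lemma Bv_carrier[simp]: "x \<in> carrier_vec (2*p) \<Longrightarrow> Bmat p \<beta> k z *\<^sub>v x \<in> carrier_vec (2*p)"
  by (rule mult_mat_vec_carrier[OF Bmat_carrier])

lemma Biv_carrier[simp]: "x \<in> carrier_vec (2*p) \<Longrightarrow> Bimat p \<beta> k z *\<^sub>v x \<in> carrier_vec (2*p)"
  by (rule mult_mat_vec_carrier[OF Bimat_carrier])

lemma jj_vec: "x \<in> carrier_vec (2*p) \<Longrightarrow> jmat p *\<^sub>v (jmat p *\<^sub>v x) = x"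
  by (subst assoc_mult_mat_vec[OF j_carrier j_carrier, symmetric]) (simp_all add: jj)

lemma T_vec:
  assumes b: "\<beta> k \<in> carrier_mat p (2*p)" and x: "x \<in> carrier_vec (2*p)"
  shows "(Cmat p \<beta> k * jmat p) *\<^sub>v x =
    2 \<cdot>\<^sub>v (mat_adjoint (um p (\<beta> k)) *\<^sub>v (um p (\<beta> k) *\<^sub>v (jmat p *\<^sub>v x))) - x"
proof -
  let ?u = "um p (\<beta> k)"
  have u: "?u \<in> carrier_mat p (2*p)" using b by simp
  have au: "mat_adjoint ?u \<in> carrier_mat (2*p) p" using u by simp
  have G: "mat_adjoint ?u * ?u \<in> carrier_mat (2*p) (2*p)" by (rule mult_carrier_mat[OF au u])
  have jx: "jmat p *\<^sub>v x \<in> carrier_vec (2*p)" using x by simp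
  have "(Cmat p \<beta> k * jmat p) *\<^sub>v x = Cmat p \<beta> k *\<^sub>v (jmat p *\<^sub>v x)"
    by (rule assoc_mult_mat_vec[OF Cmat_carrier j_carrier x])
  also have "\<dots> = (2 \<cdot>\<^sub>m (mat_adjoint ?u * ?u)) *\<^sub>v (jmat p *\<^sub>v x) - jmat p *\<^sub>v (jmat p *\<^sub>v x)"
    unfolding Cmat_eq[of \<beta> k p, OF b]
    by (rule minus_mult_distrib_mat_vec[OF smult_carrier_mat[OF G] j_carrier jx])
  also have "\<dots> = 2 \<cdot>\<^sub>v (mat_adjoint ?u *\<^sub>v (?u *\<^sub>v (jmat p *\<^sub>v x))) - x"
    unfolding smult_mat_vec[OF G jx] assoc_mult_mat_vec[OF au u jx] jj_vec[OF x] ..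
  finally show ?thesis .
qed

lemma vec_lin1: assumes "x \<in> carrier_vec n" "w \<in> carrier_vec n"
  shows "x + s \<cdot>\<^sub>v (2 \<cdot>\<^sub>v w - x) = (1 - s) \<cdot>\<^sub>v x + (2 * s) \<cdot>\<^sub>v (w :: complex vec)"
  by (rule eq_vecI) (use assms in \<open>simp_all add: algebra_simps\<close>)

lemma B_vec:
  assumes b: "\<beta> k \<in> carrier_mat p (2*p)" and x: "x \<in> carrier_vec (2*p)"
  shows "Bmat p \<beta> k z *\<^sub>v x = (1 - \<i>/z) \<cdot>\<^sub>v x +
     (2 * (\<i>/z)) \<cdot>\<^sub>v (mat_adjoint (um p (\<beta> k)) *\<^sub>v (um p (\<beta> k) *\<^sub>v (jmat p *\<^sub>v x)))"
proof -
  let ?u = "um p (\<beta> k)"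
  let ?w = "mat_adjoint ?u *\<^sub>v (?u *\<^sub>v (jmat p *\<^sub>v x))"
  have w: "?w \<in> carrier_vec (2*p)" using b x by simp
  have "Bmat p \<beta> k z *\<^sub>v x = x + (\<i>/z) \<cdot>\<^sub>v ((Cmat p \<beta> k * jmat p) *\<^sub>v x)"
    unfolding Bmat_def
    by (subst add_mult_distrib_mat_vec[OF one_carrier_mat smult_carrier_mat[OF Cj_carrier] x])
       (simp add: smult_mat_vec[OF Cj_carrier x] x)
  also have "\<dots> = x + (\<i>/z) \<cdot>\<^sub>v (2 \<cdot>\<^sub>v ?w - x)" unfolding T_vec[where \<beta>=\<beta> and k=k and p=p, OF b x] ..
  also have "\<dots> = (1 - \<i>/z) \<cdot>\<^sub>v x + (2 * (\<i>/z)) \<cdot>\<^sub>v ?w"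
    by (rule vec_lin1[OF x w])
  finally show ?thesis .
qed

lemma aux_s: "cnj (1 - s) * (2 * s) + cnj (2 * s) * (1 - s) + cnj (2 * s) * (2 * s) = 4 * Re (s::complex)"
  by (simp add: complex_eq_iff algebra_simps)

definition jq :: "nat \<Rightarrow> complex vec \<Rightarrow> complex" where "jq p x = ipr x (jmat p *\<^sub>v x)"

lemma jq_B:
  assumes b: "\<beta> k \<in> carrier_mat p (2*p)" and bJ: "\<beta> k * Jmat p * mat_adjoint (\<beta> k) = 1\<^sub>m p"
    and x: "x \<in> carrier_vec (2*p)"
  shows "jq p (Bmat p \<beta> k z *\<^sub>v x) = (cnj (1 - \<i>/z) * (1 - \<i>/z)) * jq p x
     + 4 * Re (\<i>/z) * ipr (um p (\<beta> k) *\<^sub>v (jmat p *\<^sub>v x)) (um p (\<beta> k) *\<^sub>v (jmat p *\<^sub>v x))"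
proof -
  let ?u = "um p (\<beta> k)"
  let ?j = "jmat p"
  define y where "y = ?u *\<^sub>v (?j *\<^sub>v x)"
  define w where "w = mat_adjoint ?u *\<^sub>v y"
  define a where "a = 1 - \<i>/z"
  define c where "c = 2 * (\<i>/z)"
  have u: "?u \<in> carrier_mat p (2*p)" using b by simp
  have au: "mat_adjoint ?u \<in> carrier_mat (2*p) p" using u by simp
  have jx: "?j *\<^sub>v x \<in> carrier_vec (2*p)" using x by simp
  have y: "y \<in> carrier_vec p" unfolding y_def using u jx by simp
  have w: "w \<in> carrier_vec (2*p)" unfolding w_def using au y by simp
  have jw: "?j *\<^sub>v w \<in> carrier_vec (2*p)" using w by simp
  have Bx: "Bmat p \<beta> k z *\<^sub>v x = a \<cdot>\<^sub>v x + c \<cdot>\<^sub>v w"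
    unfolding B_vec[where \<beta>=\<beta> and k=k and p=p and z=z, OF b x] a_def c_def w_def y_def ..
  have jB: "?j *\<^sub>v (a \<cdot>\<^sub>v x + c \<cdot>\<^sub>v w) = a \<cdot>\<^sub>v (?j *\<^sub>v x) + c \<cdot>\<^sub>v (?j *\<^sub>v w)"
    using x w by (simp add: mult_add_distrib_mat_vec[OF j_carrier] mult_mat_vec[OF j_carrier])
  have e1: "ipr x (?j *\<^sub>v w) = ipr y y"
  proof -
    have "ipr x (?j *\<^sub>v w) = ipr (?j *\<^sub>v x) w"
      using ipr_adj[OF j_carrier x w] by (simp add: adj_j)
    also have "\<dots> = ipr y y" unfolding w_def
      using ipr_adj[OF au jx y] by (simp add: y_def)
    finally show ?thesis .
  qed
  have e2: "ipr w (?j *\<^sub>v x) = ipr y y"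
  proof -
    have "ipr w (?j *\<^sub>v x) = cnj (ipr x (?j *\<^sub>v w))"
      using ipr_adj[OF j_carrier x w] ipr_sym[OF w jx] by (simp add: adj_j)
    also have "\<dots> = ipr y y" unfolding e1 using ipr_self_real[of y] by (metis complex_cnj_complex_of_real)
    finally show ?thesis .
  qed
  have e3: "ipr w (?j *\<^sub>v w) = ipr y y"
  proof -
    have "ipr w (?j *\<^sub>v w) = ipr y (?u *\<^sub>v (?j *\<^sub>v w))"
      unfolding w_def using ipr_adj[OF u y jw[unfolded w_def]] by simp
    also have "?u *\<^sub>v (?j *\<^sub>v w) = (?u * ?j * mat_adjoint ?u) *\<^sub>v y"
      unfolding w_def
      using assoc_mult_mat_vec[OF mult_carrier_mat[OF u j_carrier] au y]
                    assoc_mult_mat_vec[OF u j_carrier, of "mat_adjoint ?u *\<^sub>v y"] au y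
      by simp
    also have "\<dots> = y" unfolding uju[OF b bJ] using y by simp
    finally show ?thesis .
  qed
  have "jq p (Bmat p \<beta> k z *\<^sub>v x) = ipr (a \<cdot>\<^sub>v x + c \<cdot>\<^sub>v w) (a \<cdot>\<^sub>v (?j *\<^sub>v x) + c \<cdot>\<^sub>v (?j *\<^sub>v w))"
    unfolding jq_def Bx jB ..
  also have "\<dots> = cnj a * a * ipr x (?j *\<^sub>v x) + cnj a * c * ipr x (?j *\<^sub>v w)
      + cnj c * a * ipr w (?j *\<^sub>v x) + cnj c * c * ipr w (?j *\<^sub>v w)"
    using x w jx jw
    by (simp add: ipr_add1[of _ "2*p"] ipr_add2[of _ "2*p"] ipr_smult1[of _ "2*p"] ipr_smult2[of _ "2*p"] algebra_simps)
  also have "\<dots> = cnj a * a * jq p x + (cnj a * c + cnj c * a + cnj c * c) * ipr y y"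
    unfolding e1 e2 e3 jq_def by (simp add: algebra_simps)
  also have "cnj a * c + cnj c * a + cnj c * c = 4 * Re (\<i>/z)"
    unfolding a_def c_def by (rule aux_s)
  finally show ?thesis unfolding a_def y_def by simp
qed

lemma Re_s_neg: "Im z < 0 \<Longrightarrow> Re (\<i>/z) < 0"
proof -
  assume z: "Im z < 0"
  have "Re (\<i>/z) = Im z / ((Re z)^2 + (Im z)^2)" by (simp add: Re_divide power2_eq_square)
  moreover have "(Re z)^2 + (Im z)^2 > 0" using z by (simp add: add_nonneg_pos)
  ultimately show ?thesis using z by (simp add: divide_neg_pos)
qed

lemma a_ne_0: "Im z < 0 \<Longrightarrow> 1 - \<i>/z \<noteq> 0"
proof
  assume z: "Im z < 0" and e: "1 - \<i>/z = 0"
  hence "\<i>/z = 1" by (simp only: right_minus_eq)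
  hence "Re (\<i>/z) = 1" by simp
  with Re_s_neg[OF z] show False by simp
qed

definition jn :: "nat \<Rightarrow> complex vec \<Rightarrow> real" where "jn p x = Re (jq p x)"

lemma ipr_zero1: "y \<in> carrier_vec n \<Longrightarrow> ipr (0\<^sub>v n) y = 0"
  by (subst ipr_sum[of _ n]) simp_all

lemma jq_zero: "jq p (0\<^sub>v (2*p)) = 0"
  unfolding jq_def by (rule ipr_zero1) (rule jv_carrier, rule zero_carrier_vec)

lemma cnj_mult_self: "cnj a * a = complex_of_real ((cmod a)^2)"
  by (subst complex_norm_square) (rule mult.commute)

lemma um_dims[simp]: "b \<in> carrier_mat p (2*p) \<Longrightarrow> dim_col (um p b) = 2*p"
   "b \<in> carrier_mat p (2*p) \<Longrightarrow> dim_row (um p b) = p"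
  by (rule carrier_matD(2)[OF um_carrier], assumption) (rule carrier_matD(1)[OF um_carrier], assumption)

lemma cone_B:
  assumes b: "\<beta> k \<in> carrier_mat p (2*p)" and bJ: "\<beta> k * Jmat p * mat_adjoint (\<beta> k) = 1\<^sub>m p"
    and x: "x \<in> carrier_vec (2*p)" and z: "Im z < 0" and c: "jn p x \<le> 0"
  shows "jn p (Bmat p \<beta> k z *\<^sub>v x) \<le> 0" and "x \<noteq> 0\<^sub>v (2*p) \<Longrightarrow> Bmat p \<beta> k z *\<^sub>v x \<noteq> 0\<^sub>v (2*p)"
proof -
  let ?u = "um p (\<beta> k)"
  define y where "y = ?u *\<^sub>v (jmat p *\<^sub>v x)"
  have y: "y \<in> carrier_vec p" unfolding y_def using b x by simp
  have e: "jn p (Bmat p \<beta> k z *\<^sub>v x) = (cmod (1 - \<i>/z))^2 * jn p x + 4 * Re (\<i>/z) * Re (ipr y y)"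
    unfolding jn_def jq_B[where \<beta>=\<beta> and k=k and p=p and z=z, OF b bJ x] cnj_mult_self y_def
    by simp
  have s: "Re (\<i>/z) < 0" by (rule Re_s_neg[OF z])
  have t1: "(cmod (1 - \<i>/z))^2 * jn p x \<le> 0" using c by (simp add: mult_nonneg_nonpos)
  have t2: "4 * Re (\<i>/z) * Re (ipr y y) \<le> 0" using s ipr_self_ge[of y]
    by (simp add: mult_nonpos_nonneg)
  show "jn p (Bmat p \<beta> k z *\<^sub>v x) \<le> 0" unfolding e using t1 t2 by linarith
  assume nz: "x \<noteq> 0\<^sub>v (2*p)"
  show "Bmat p \<beta> k z *\<^sub>v x \<noteq> 0\<^sub>v (2*p)"
  proof
    assume B0: "Bmat p \<beta> k z *\<^sub>v x = 0\<^sub>v (2*p)"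
    have "jn p (Bmat p \<beta> k z *\<^sub>v x) = 0" unfolding B0 jn_def jq_zero by simp
    hence "4 * Re (\<i>/z) * Re (ipr y y) = 0" using t1 t2 unfolding e by linarith
    hence "Re (ipr y y) = 0" using s by simp
    hence y0: "y = 0\<^sub>v p" using ipr_self_zero[of y] y by simp
    have "Bmat p \<beta> k z *\<^sub>v x = (1 - \<i>/z) \<cdot>\<^sub>v x + (2 * (\<i>/z)) \<cdot>\<^sub>v (mat_adjoint ?u *\<^sub>v 0\<^sub>v p)"
      unfolding B_vec[where \<beta>=\<beta> and k=k and p=p and z=z, OF b x] y0[unfolded y_def] ..
    also have "mat_adjoint ?u *\<^sub>v 0\<^sub>v p = 0\<^sub>v (2*p)"
      using b by (intro eq_vecI) simp_all
    also have "(1 - \<i>/z) \<cdot>\<^sub>v x + (2 * (\<i>/z)) \<cdot>\<^sub>v 0\<^sub>v (2*p) = (1 - \<i>/z) \<cdot>\<^sub>v x"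
      using x by (intro eq_vecI) simp_all
    finally have ax: "(1 - \<i>/z) \<cdot>\<^sub>v x = 0\<^sub>v (2*p)" using B0 by simp
    have "x = 0\<^sub>v (2*p)"
    proof (rule eq_vecI)
      fix i assume i: "i < dim_vec (0\<^sub>v (2*p) :: complex vec)"
      have "((1 - \<i>/z) \<cdot>\<^sub>v x) $ i = 0" unfolding ax using i by simp
      hence "(1 - \<i>/z) * x $ i = 0" using i x by simp
      with a_ne_0[OF z] have "x $ i = 0" by (simp only: mult_eq_0_iff) blast
      thus "x $ i = 0\<^sub>v (2*p) $ i" using i by simp
    qed (use x in simp)
    with nz show False ..
  qed
qed

lemma TT_vec:
  assumes b: "\<beta> k \<in> carrier_mat p (2*p)" and bJ: "\<beta> k * Jmat p * mat_adjoint (\<beta> k) = 1\<^sub>m p"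
    and x: "x \<in> carrier_vec (2*p)"
  shows "(Cmat p \<beta> k * jmat p) *\<^sub>v ((Cmat p \<beta> k * jmat p) *\<^sub>v x) = x"
proof -
  let ?u = "um p (\<beta> k)" and ?j = "jmat p" and ?T = "Cmat p \<beta> k * jmat p"
  define y where "y = ?u *\<^sub>v (?j *\<^sub>v x)"
  define w where "w = mat_adjoint ?u *\<^sub>v y"
  have u: "?u \<in> carrier_mat p (2*p)" using b by simp
  have au: "mat_adjoint ?u \<in> carrier_mat (2*p) p" using u by simp
  have y: "y \<in> carrier_vec p" unfolding y_def using b x by simp
  have w: "w \<in> carrier_vec (2*p)" unfolding w_def using b y by simp
  have Tx: "?T *\<^sub>v x = 2 \<cdot>\<^sub>v w - x" unfolding w_def y_def by (rule T_vec[where \<beta>=\<beta> and k=k and p=p, OF b x])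
  have 2: "2 \<cdot>\<^sub>v w - x \<in> carrier_vec (2*p)" using w x by simp
  have uw: "?u *\<^sub>v (?j *\<^sub>v w) = y"
  proof -
    have "?u *\<^sub>v (?j *\<^sub>v w) = (?u * ?j * mat_adjoint ?u) *\<^sub>v y"
      unfolding w_def
      using assoc_mult_mat_vec[OF mult_carrier_mat[OF u j_carrier] au y]
                    assoc_mult_mat_vec[OF u j_carrier, of "mat_adjoint ?u *\<^sub>v y"] au y
      by simp
    also have "\<dots> = y" unfolding uju[OF b bJ] using y by simp
    finally show ?thesis .
  qed
  have "?u *\<^sub>v (?j *\<^sub>v (2 \<cdot>\<^sub>v w - x)) = 2 \<cdot>\<^sub>v (?u *\<^sub>v (?j *\<^sub>v w)) - ?u *\<^sub>v (?j *\<^sub>v x)"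
    using w x u
    by (simp add: mult_minus_distrib_mat_vec[OF j_carrier] mult_minus_distrib_mat_vec[OF u]
         mult_mat_vec[OF j_carrier] mult_mat_vec[OF u])
  also have "\<dots> = y" unfolding uw y_def[symmetric] using y by (intro eq_vecI) simp_all
  finally have e: "?u *\<^sub>v (?j *\<^sub>v (2 \<cdot>\<^sub>v w - x)) = y" .
  have "?T *\<^sub>v (?T *\<^sub>v x) = ?T *\<^sub>v (2 \<cdot>\<^sub>v w - x)" unfolding Tx ..
  also have "\<dots> = 2 \<cdot>\<^sub>v (mat_adjoint ?u *\<^sub>v (?u *\<^sub>v (?j *\<^sub>v (2 \<cdot>\<^sub>v w - x)))) - (2 \<cdot>\<^sub>v w - x)"
    by (rule T_vec[where \<beta>=\<beta> and k=k and p=p, OF b 2])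
  also have "\<dots> = 2 \<cdot>\<^sub>v w - (2 \<cdot>\<^sub>v w - x)" unfolding e by (simp only: w_def)
  also have "\<dots> = x" using w x by (intro eq_vecI) simp_all
  finally show ?thesis .
qed

lemma vec_lin2: assumes "x \<in> carrier_vec n" "t \<in> carrier_vec n"
  shows "(x + s \<cdot>\<^sub>v t) - s \<cdot>\<^sub>v (t + s \<cdot>\<^sub>v x) = (1 - s^2) \<cdot>\<^sub>v (x :: complex vec)"
  by (rule eq_vecI) (use assms in \<open>simp_all add: algebra_simps power2_eq_square\<close>)

lemma BiB_vec:
  assumes b: "\<beta> k \<in> carrier_mat p (2*p)" and bJ: "\<beta> k * Jmat p * mat_adjoint (\<beta> k) = 1\<^sub>m p"
    and x: "x \<in> carrier_vec (2*p)"
  shows "Bimat p \<beta> k z *\<^sub>v (Bmat p \<beta> k z *\<^sub>v x) = (1 - (\<i>/z)^2) \<cdot>\<^sub>v x"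
proof -
  let ?T = "Cmat p \<beta> k * jmat p" and ?s = "\<i>/z"
  have Tc: "?T *\<^sub>v v \<in> carrier_vec (2*p)" if "v \<in> carrier_vec (2*p)" for v
    by (rule mult_mat_vec_carrier[OF Cj_carrier that])
  have Bv: "Bmat p \<beta> k z *\<^sub>v v = v + ?s \<cdot>\<^sub>v (?T *\<^sub>v v)" if v: "v \<in> carrier_vec (2*p)" for v
    unfolding Bmat_def
    by (subst add_mult_distrib_mat_vec[OF one_carrier_mat smult_carrier_mat[OF Cj_carrier] v])
       (simp add: smult_mat_vec[OF Cj_carrier v] v)
  have Biv: "Bimat p \<beta> k z *\<^sub>v v = v - ?s \<cdot>\<^sub>v (?T *\<^sub>v v)" if v: "v \<in> carrier_vec (2*p)" for v
    unfolding Bimat_def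
    by (subst minus_mult_distrib_mat_vec[OF one_carrier_mat smult_carrier_mat[OF Cj_carrier] v])
       (simp add: smult_mat_vec[OF Cj_carrier v] v)
  have Tx: "?T *\<^sub>v x \<in> carrier_vec (2*p)" by (rule Tc[OF x])
  have TB: "?T *\<^sub>v (x + ?s \<cdot>\<^sub>v (?T *\<^sub>v x)) = ?T *\<^sub>v x + ?s \<cdot>\<^sub>v x"
    using x Tx
    by (simp add: mult_add_distrib_mat_vec[OF Cj_carrier] mult_mat_vec[OF Cj_carrier] TT_vec[where \<beta>=\<beta> and k=k and p=p, OF b bJ x])
  have xs: "x + ?s \<cdot>\<^sub>v (?T *\<^sub>v x) \<in> carrier_vec (2*p)" using x Tx by simp
  show ?thesis
    unfolding Bv[OF x] Biv[OF xs] TB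
    by (rule vec_lin2[OF x Tx])
qed

lemma mat_eq_vecI:
  assumes A: "A \<in> carrier_mat n n" and B: "B \<in> carrier_mat n n"
    and e: "\<And>x. x \<in> carrier_vec n \<Longrightarrow> A *\<^sub>v x = B *\<^sub>v (x :: 'a :: comm_ring_1 vec)"
  shows "A = B"
proof (rule eq_matI)
  fix i j assume ij: "i < dim_row B" "j < dim_col B"
  hence i: "i < n" and j: "j < n" using B by auto
  have "A $$ (i,j) = (A *\<^sub>v unit_vec n j) $ i" using A i j by simp
  also have "\<dots> = (B *\<^sub>v unit_vec n j) $ i" using e[OF unit_vec_carrier] by simp
  also have "\<dots> = B $$ (i,j)" using B i j by simp
  finally show "A $$ (i,j) = B $$ (i,j)" .
qed (use A B in simp_all)

lemma BiB:
  assumes b: "\<beta> k \<in> carrier_mat p (2*p)" and bJ: "\<beta> k * Jmat p * mat_adjoint (\<beta> k) = 1\<^sub>m p"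
  shows "Bimat p \<beta> k z * Bmat p \<beta> k z = (1 - (\<i>/z)^2) \<cdot>\<^sub>m 1\<^sub>m (2*p)"
proof (rule mat_eq_vecI[of _ "2*p"])
  fix x :: "complex vec" assume x: "x \<in> carrier_vec (2*p)"
  show "(Bimat p \<beta> k z * Bmat p \<beta> k z) *\<^sub>v x = ((1 - (\<i>/z)^2) \<cdot>\<^sub>m 1\<^sub>m (2*p)) *\<^sub>v x"
    unfolding assoc_mult_mat_vec[OF Bimat_carrier Bmat_carrier x] BiB_vec[where \<beta>=\<beta> and k=k and p=p and z=z, OF b bJ x]
      smult_mat_vec[OF one_carrier_mat x] one_mult_mat_vec[OF x] ..
qed (rule mult_carrier_mat[OF Bimat_carrier Bmat_carrier], rule smult_carrier_mat[OF one_carrier_mat])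

fun Prm :: "nat \<Rightarrow> (nat \<Rightarrow> complex mat) \<Rightarrow> nat \<Rightarrow> nat \<Rightarrow> complex \<Rightarrow> complex mat" where
  "Prm p \<beta> a 0 z = 1\<^sub>m (2*p)"
| "Prm p \<beta> a (Suc n) z = Prm p \<beta> a n z * Bmat p \<beta> (a+n) z"

fun Pim :: "nat \<Rightarrow> (nat \<Rightarrow> complex mat) \<Rightarrow> nat \<Rightarrow> nat \<Rightarrow> complex \<Rightarrow> complex mat" where
  "Pim p \<beta> a 0 z = 1\<^sub>m (2*p)"
| "Pim p \<beta> a (Suc n) z = Bimat p \<beta> (a+n) z * Pim p \<beta> a n z"

lemma Prm_carrier[simp]: "Prm p \<beta> a n z \<in> carrier_mat (2*p) (2*p)"
  by (induction n) (simp_all add: mult_carrier_mat[OF _ Bmat_carrier])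

lemma Pim_carrier[simp]: "Pim p \<beta> a n z \<in> carrier_mat (2*p) (2*p)"
  by (induction n) (simp_all add: mult_carrier_mat[OF Bimat_carrier])

lemma Prm_add: "Prm p \<beta> a (n + m) z = Prm p \<beta> a n z * Prm p \<beta> (a+n) m z"
proof (induction m)
  case 0
  show ?case by (simp add: right_mult_one_mat[OF Prm_carrier])
next
  case (Suc m)
  have "Prm p \<beta> a (n + Suc m) z = Prm p \<beta> a n z * Prm p \<beta> (a+n) m z * Bmat p \<beta> (a+n+m) z"
    using Suc by (simp add: add.assoc)
  also have "\<dots> = Prm p \<beta> a n z * (Prm p \<beta> (a+n) m z * Bmat p \<beta> (a+n+m) z)"
    by (rule assoc_mult_mat[OF Prm_carrier Prm_carrier Bmat_carrier])
  finally show ?case by simp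
qed

lemma Pim_Prm:
  assumes b: "\<And>k. a \<le> k \<Longrightarrow> k < a + n \<Longrightarrow> \<beta> k \<in> carrier_mat p (2*p)"
    and bJ: "\<And>k. a \<le> k \<Longrightarrow> k < a + n \<Longrightarrow> \<beta> k * Jmat p * mat_adjoint (\<beta> k) = 1\<^sub>m p"
  shows "Pim p \<beta> a n z * Prm p \<beta> a n z = ((1 - (\<i>/z)^2)^n) \<cdot>\<^sub>m 1\<^sub>m (2*p)"
  using b bJ
proof (induction n)
  case 0
  have "1\<^sub>m (2*p) = (1::complex) \<cdot>\<^sub>m 1\<^sub>m (2*p)" by (intro eq_matI) simp_all
  thus ?case by (simp add: right_mult_one_mat[OF one_carrier_mat])
next
  case (Suc n)
  let ?Bi = "Bimat p \<beta> (a+n) z" and ?B = "Bmat p \<beta> (a+n) z" and ?d = "(1 - (\<i>/z)^2)^n"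
  have IH: "Pim p \<beta> a n z * Prm p \<beta> a n z = ?d \<cdot>\<^sub>m 1\<^sub>m (2*p)"
    using Suc.IH Suc.prems by simp
  have "Pim p \<beta> a (Suc n) z * Prm p \<beta> a (Suc n) z = ?Bi * Pim p \<beta> a n z * (Prm p \<beta> a n z * ?B)"
    by simp
  also have "\<dots> = ?Bi * (Pim p \<beta> a n z * (Prm p \<beta> a n z * ?B))"
    by (rule assoc_mult_mat[OF Bimat_carrier Pim_carrier mult_carrier_mat[OF Prm_carrier Bmat_carrier]])
  also have "Pim p \<beta> a n z * (Prm p \<beta> a n z * ?B) = (Pim p \<beta> a n z * Prm p \<beta> a n z) * ?B"
    by (rule assoc_mult_mat[OF Pim_carrier Prm_carrier Bmat_carrier, symmetric])
  also have "\<dots> = ?d \<cdot>\<^sub>m ?B"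
    unfolding IH by (simp add: mult_smult_assoc_mat[OF one_carrier_mat Bmat_carrier] left_mult_one_mat[OF Bmat_carrier])
  also have "?Bi * (?d \<cdot>\<^sub>m ?B) = ?d \<cdot>\<^sub>m (?Bi * ?B)"
    by (rule mult_smult_distrib[OF Bimat_carrier Bmat_carrier])
  also have "?Bi * ?B = (1 - (\<i>/z)^2) \<cdot>\<^sub>m 1\<^sub>m (2*p)"
    by (rule BiB[where \<beta>=\<beta> and k="a+n" and p=p and z=z]) (use Suc.prems in simp_all)
  also have "?d \<cdot>\<^sub>m ((1 - (\<i>/z)^2) \<cdot>\<^sub>m 1\<^sub>m (2*p)) = ((1 - (\<i>/z)^2)^(Suc n)) \<cdot>\<^sub>m 1\<^sub>m (2*p)"
    by (intro eq_matI) (simp_all add: algebra_simps)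
  finally show ?case .
qed

lemma Wsol_carrier[simp]: "Wsol p \<beta> k w \<in> carrier_mat (2*p) (2*p)"
proof (induction k)
  case (Suc k)
  have "jmat p * Cmat p \<beta> k * Wsol p \<beta> k w \<in> carrier_mat (2*p) (2*p)"
    by (rule mult_carrier_mat[OF mult_carrier_mat[OF j_carrier Cmat_carrier] Suc])
  thus ?case by (simp add: add_carrier_mat)
qed simp

lemma adj_Wsol:
  assumes b: "\<And>k. k < n \<Longrightarrow> \<beta> k \<in> carrier_mat p (2*p)"
  shows "mat_adjoint (Wsol p \<beta> n (cnj z)) = Prm p \<beta> 0 n z"
  using b
proof (induction n)
  case 0 show ?case by simp
next
  case (Suc n)
  let ?W = "Wsol p \<beta> n (cnj z)" and ?C = "Cmat p \<beta> n" and ?j = "jmat p"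
  have IH: "mat_adjoint ?W = Prm p \<beta> 0 n z" using Suc by simp
  have Ch: "mat_adjoint ?C = ?C" by (rule Cmat_herm) (use Suc.prems in simp)
  have jC: "?j * ?C \<in> carrier_mat (2*p) (2*p)" by (rule mult_carrier_mat[OF j_carrier Cmat_carrier])
  have jCW: "?j * ?C * ?W \<in> carrier_mat (2*p) (2*p)" by (rule mult_carrier_mat[OF jC Wsol_carrier])
  have a1: "mat_adjoint (?j * ?C * ?W) = mat_adjoint ?W * (?C * ?j)"
    unfolding adj_mult[OF jC Wsol_carrier] adj_mult[OF j_carrier Cmat_carrier] Ch adj_j ..
  have "mat_adjoint (Wsol p \<beta> (Suc n) (cnj z)) = mat_adjoint ?W + cnj (- \<i> / cnj z) \<cdot>\<^sub>m mat_adjoint (?j * ?C * ?W)"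
    by (simp add: adj_add[OF Wsol_carrier smult_carrier_mat[OF jCW]] adj_smult)
  also have "cnj (- \<i> / cnj z) = \<i> / z" by simp
  also have "mat_adjoint ?W + (\<i> / z) \<cdot>\<^sub>m mat_adjoint (?j * ?C * ?W) = Prm p \<beta> 0 n z * Bmat p \<beta> n z"
    unfolding a1 IH Bmat_def
    by (simp add: mult_add_distrib_mat[OF Prm_carrier one_carrier_mat smult_carrier_mat[OF Cj_carrier]]
          mult_smult_distrib[OF Prm_carrier Cj_carrier] right_mult_one_mat[OF Prm_carrier])
  finally show ?case by simp
qed

lemma cone_Prm:
  assumes b: "\<And>k. a \<le> k \<Longrightarrow> k < a + n \<Longrightarrow> \<beta> k \<in> carrier_mat p (2*p)"
    and bJ: "\<And>k. a \<le> k \<Longrightarrow> k < a + n \<Longrightarrow> \<beta> k * Jmat p * mat_adjoint (\<beta> k) = 1\<^sub>m p"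
    and z: "Im z < 0"
  shows "x \<in> carrier_vec (2*p) \<Longrightarrow> jn p x \<le> 0 \<Longrightarrow> x \<noteq> 0\<^sub>v (2*p) \<Longrightarrow>
     jn p (Prm p \<beta> a n z *\<^sub>v x) \<le> 0 \<and> Prm p \<beta> a n z *\<^sub>v x \<noteq> 0\<^sub>v (2*p)"
  using b bJ
proof (induction n arbitrary: x)
  case 0 thus ?case by simp
next
  case (Suc n)
  let ?B = "Bmat p \<beta> (a+n) z"
  have bb: "\<beta> (a+n) \<in> carrier_mat p (2*p)" and bbJ: "\<beta> (a+n) * Jmat p * mat_adjoint (\<beta> (a+n)) = 1\<^sub>m p"
    using Suc.prems by simp_all
  have Bx: "?B *\<^sub>v x \<in> carrier_vec (2*p)" using Suc.prems by simp
  have c1: "jn p (?B *\<^sub>v x) \<le> 0" and c2: "?B *\<^sub>v x \<noteq> 0\<^sub>v (2*p)"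
    using cone_B[where \<beta>=\<beta> and k="a+n" and p=p and z=z, OF bb bbJ _ z] Suc.prems by simp_all
  have "Prm p \<beta> a (Suc n) z *\<^sub>v x = Prm p \<beta> a n z *\<^sub>v (?B *\<^sub>v x)"
    using Suc.prems by (simp add: assoc_mult_mat_vec[OF Prm_carrier Bmat_carrier])
  moreover have "jn p (Prm p \<beta> a n z *\<^sub>v (?B *\<^sub>v x)) \<le> 0 \<and> Prm p \<beta> a n z *\<^sub>v (?B *\<^sub>v x) \<noteq> 0\<^sub>v (2*p)"
    by (rule Suc.IH[OF Bx c1 c2]) (use Suc.prems in simp_all)
  ultimately show ?case by simp
qed

lemma Cmat_dims[simp]: "dim_row (Cmat p \<beta> k) = 2*p" "dim_col (Cmat p \<beta> k) = 2*p"
  using carrier_matD[OF Cmat_carrier[of p \<beta> k]] by simp_all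

lemma Bmat_idx: "l < 2*p \<Longrightarrow> j < 2*p \<Longrightarrow> Bmat p \<beta> k z $$ (l,j) =
    (if l = j then 1 else 0) + (\<i>/z) * (Cmat p \<beta> k * jmat p) $$ (l,j)"
proof -
  assume lj: "l < 2*p" "j < 2*p"
  have d: "dim_row (Cmat p \<beta> k * jmat p) = 2*p" "dim_col (Cmat p \<beta> k * jmat p) = 2*p"
    using carrier_matD[OF Cmat_carrier[of p \<beta> k]] by simp_all
  show ?thesis unfolding Bmat_def using lj by (simp add: d)
qed

lemma Bimat_idx: "l < 2*p \<Longrightarrow> j < 2*p \<Longrightarrow> Bimat p \<beta> k z $$ (l,j) =
    (if l = j then 1 else 0) - (\<i>/z) * (Cmat p \<beta> k * jmat p) $$ (l,j)"
proof -
  assume lj: "l < 2*p" "j < 2*p"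
  have d: "dim_row (Cmat p \<beta> k * jmat p) = 2*p" "dim_col (Cmat p \<beta> k * jmat p) = 2*p"
    using carrier_matD[OF Cmat_carrier[of p \<beta> k]] by simp_all
  show ?thesis unfolding Bimat_def using lj by (simp add: d)
qed

lemma mult_idx_sum: assumes "A \<in> carrier_mat n m" "B \<in> carrier_mat m q" "i < n" "j < q"
  shows "(A * B) $$ (i,j) = (\<Sum>l<m. A $$ (i,l) * B $$ (l,j))"
proof -
  have d: "dim_row A = n" "dim_col A = m" "dim_row B = m" "dim_col B = q" using assms(1,2) by auto
  show ?thesis using assms(3,4) unfolding index_mult_mat(1)[of i A j B, unfolded d, OF assms(3,4)] scalar_prod_def
    by (simp add: d atLeast0LessThan)
qed
lemma holo_aux: "(\<lambda>z. c + (\<i>/z) * d) holomorphic_on (- {0})"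
  by (intro holomorphic_on_add holomorphic_on_const holomorphic_on_mult holomorphic_on_divide holomorphic_on_ident) auto

lemma holo_aux2: "(\<lambda>z. c - (\<i>/z) * d) holomorphic_on (- {0})"
  by (intro holomorphic_on_diff holomorphic_on_const holomorphic_on_mult holomorphic_on_divide holomorphic_on_ident) auto

lemma holo_sum: fixes F :: "nat \<Rightarrow> complex \<Rightarrow> complex"
  assumes h: "\<And>l. l \<in> {..<m} \<Longrightarrow> F l holomorphic_on S"
  shows "(\<lambda>z. \<Sum>l<m. F l z) holomorphic_on S"
  by (rule holomorphic_on_sum) (rule h)

lemma Prm_holo: "i < 2*p \<Longrightarrow> j < 2*p \<Longrightarrow> (\<lambda>z. Prm p \<beta> a n z $$ (i,j)) holomorphic_on (- {0})"
proof (induction n arbitrary: j)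
  case 0
  have "(\<lambda>z. Prm p \<beta> a 0 z $$ (i,j)) = (\<lambda>z. (if i = j then 1 else 0))"
    using 0 by simp
  thus ?case by (simp only: holomorphic_on_const)
next
  case (Suc n)
  have e: "Prm p \<beta> a (Suc n) z $$ (i,j) = (\<Sum>l<2*p. Prm p \<beta> a n z $$ (i,l) *
      ((if l = j then 1 else 0) + (\<i>/z) * (Cmat p \<beta> (a+n) * jmat p) $$ (l,j)))" for z
    using Suc.prems by (simp add: mult_idx_sum[OF Prm_carrier Bmat_carrier] Bmat_idx)
  have h: "(\<lambda>z. Prm p \<beta> a n z $$ (i,l) *
      ((if l = j then 1 else 0) + (\<i>/z) * (Cmat p \<beta> (a+n) * jmat p) $$ (l,j))) holomorphic_on (- {0})"
    if "l \<in> {..<2*p}" for l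
    by (rule holomorphic_on_mult[OF Suc.IH holo_aux]) (use Suc.prems that in simp_all)
  have "(\<lambda>z. (\<Sum>l<2*p. Prm p \<beta> a n z $$ (i,l) *
      ((if l = j then 1 else 0) + (\<i>/z) * (Cmat p \<beta> (a+n) * jmat p) $$ (l,j)))) holomorphic_on (- {0})"
    by (rule holo_sum) (rule h)
  thus ?case unfolding e .
qed

lemma Pim_holo: "i < 2*p \<Longrightarrow> j < 2*p \<Longrightarrow> (\<lambda>z. Pim p \<beta> a n z $$ (i,j)) holomorphic_on (- {0})"
proof (induction n arbitrary: i)
  case 0
  have "(\<lambda>z. Pim p \<beta> a 0 z $$ (i,j)) = (\<lambda>z. (if i = j then 1 else 0))"
    using 0 by simp
  thus ?case by (simp only: holomorphic_on_const)
next
  case (Suc n)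
  have e: "Pim p \<beta> a (Suc n) z $$ (i,j) = (\<Sum>l<2*p.
      ((if i = l then 1 else 0) - (\<i>/z) * (Cmat p \<beta> (a+n) * jmat p) $$ (i,l)) * Pim p \<beta> a n z $$ (l,j))" for z
    using Suc.prems by (simp add: mult_idx_sum[OF Bimat_carrier Pim_carrier] Bimat_idx)
  have h: "(\<lambda>z. ((if i = l then 1 else 0) - (\<i>/z) * (Cmat p \<beta> (a+n) * jmat p) $$ (i,l)) * Pim p \<beta> a n z $$ (l,j))
     holomorphic_on (- {0})"
    if "l \<in> {..<2*p}" for l
    by (rule holomorphic_on_mult[OF holo_aux2 Suc.IH]) (use Suc.prems that in simp_all)
  have "(\<lambda>z. \<Sum>l<2*p.
      ((if i = l then 1 else 0) - (\<i>/z) * (Cmat p \<beta> (a+n) * jmat p) $$ (i,l)) * Pim p \<beta> a n z $$ (l,j)) holomorphic_on (- {0})"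
    by (rule holo_sum) (rule h)
  thus ?case unfolding e .
qed

definition stack :: "nat \<Rightarrow> complex mat \<Rightarrow> complex mat \<Rightarrow> complex mat" where
  "stack p X Y = mat (2*p) p (\<lambda>(l,c). if l < p then X $$ (l,c) else Y $$ (l-p,c))"

lemma stack_carrier[simp]: "stack p X Y \<in> carrier_mat (2*p) p"
  unfolding stack_def by simp

lemma stack_dims[simp]: "dim_row (stack p X Y) = 2*p" "dim_col (stack p X Y) = p"
  unfolding stack_def by simp_all

lemma stack_idx: "l < 2*p \<Longrightarrow> c < p \<Longrightarrow> stack p X Y $$ (l,c) = (if l < p then X $$ (l,c) else Y $$ (l-p,c))"
  unfolding stack_def by simp

lemma blocks:
  assumes A: "A \<in> carrier_mat (2*p) (2*p)" and X: "X \<in> carrier_mat p p" and Y: "Y \<in> carrier_mat p p"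
  shows "mat p p (\<lambda>(r,c). A $$ (r + (1-1)*p, c + (1-1)*p)) * X + mat p p (\<lambda>(r,c). A $$ (r + (1-1)*p, c + (2-1)*p)) * Y
           = mat p p (\<lambda>(a,b). (A * stack p X Y) $$ (a,b))"
    and "mat p p (\<lambda>(r,c). A $$ (r + (2-1)*p, c + (1-1)*p)) * X + mat p p (\<lambda>(r,c). A $$ (r + (2-1)*p, c + (2-1)*p)) * Y
           = mat p p (\<lambda>(a,b). (A * stack p X Y) $$ (a+p,b))"
proof -
  show "mat p p (\<lambda>(r,c). A $$ (r + (1-1)*p, c + (1-1)*p)) * X + mat p p (\<lambda>(r,c). A $$ (r + (1-1)*p, c + (2-1)*p)) * Y
           = mat p p (\<lambda>(a,b). (A * stack p X Y) $$ (a,b))"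
  proof (rule eq_matI)
    fix i j assume "i < dim_row (mat p p (\<lambda>(a,b). (A * stack p X Y) $$ (a,b)))"
      "j < dim_col (mat p p (\<lambda>(a,b). (A * stack p X Y) $$ (a,b)))"
    hence i: "i < p" and j: "j < p" by auto
    have dX: "dim_row X = p" "dim_col X = p" "dim_row Y = p" "dim_col Y = p" using X Y by auto
    show "(mat p p (\<lambda>(r,c). A $$ (r + (1-1)*p, c + (1-1)*p)) * X + mat p p (\<lambda>(r,c). A $$ (r + (1-1)*p, c + (2-1)*p)) * Y) $$ (i,j)
       = mat p p (\<lambda>(a,b). (A * stack p X Y) $$ (a,b)) $$ (i,j)"
      using i j X Y
      by (simp del: index_mult_mat(1) add: dX mult_idx2[OF A stack_carrier] mult_idx_sum[of _ p p _ p] stack_idx)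
  qed (use X Y in simp_all)
  show "mat p p (\<lambda>(r,c). A $$ (r + (2-1)*p, c + (1-1)*p)) * X + mat p p (\<lambda>(r,c). A $$ (r + (2-1)*p, c + (2-1)*p)) * Y
           = mat p p (\<lambda>(a,b). (A * stack p X Y) $$ (a+p,b))"
  proof (rule eq_matI)
    fix i j assume "i < dim_row (mat p p (\<lambda>(a,b). (A * stack p X Y) $$ (a+p,b)))"
      "j < dim_col (mat p p (\<lambda>(a,b). (A * stack p X Y) $$ (a+p,b)))"
    hence i: "i < p" and j: "j < p" by auto
    have dX: "dim_row X = p" "dim_col X = p" "dim_row Y = p" "dim_col Y = p" using X Y by auto
    show "(mat p p (\<lambda>(r,c). A $$ (r + (2-1)*p, c + (1-1)*p)) * X + mat p p (\<lambda>(r,c). A $$ (r + (2-1)*p, c + (2-1)*p)) * Y) $$ (i,j)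
       = mat p p (\<lambda>(a,b). (A * stack p X Y) $$ (a+p,b)) $$ (i,j)"
      using i j X Y
      by (simp del: index_mult_mat(1) add: dX mult_idx2[OF A stack_carrier] mult_idx_sum[of _ p p _ p] stack_idx)
  qed (use X Y in simp_all)
qed

lemma stack_vec: assumes X: "X \<in> carrier_mat p p" and Y: "Y \<in> carrier_mat p p" and v: "v \<in> carrier_vec p"
  shows "l < 2*p \<Longrightarrow> (stack p X Y *\<^sub>v v) $ l = (if l < p then (X *\<^sub>v v) $ l else (Y *\<^sub>v v) $ (l-p))"
proof -
  assume l: "l < 2*p"
  have dX: "dim_row X = p" "dim_col X = p" "dim_row Y = p" "dim_col Y = p" "dim_vec v = p" using X Y v by auto
  show ?thesis using l by (simp add: dX scalar_prod_def stack_idx)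
qed

lemma ipr_adjmult: assumes X: "X \<in> carrier_mat p p" and v: "v \<in> carrier_vec p"
  shows "conjugate v \<bullet> ((mat_adjoint X * X) *\<^sub>v v) = ipr (X *\<^sub>v v) (X *\<^sub>v v)"
proof -
  have "conjugate v \<bullet> ((mat_adjoint X * X) *\<^sub>v v) = ipr v (mat_adjoint X *\<^sub>v (X *\<^sub>v v))"
    unfolding ipr_def using X v by (simp add: assoc_mult_mat_vec[OF adj_carrier[OF X] X v])
  also have "\<dots> = ipr (X *\<^sub>v v) (X *\<^sub>v v)"
    using ipr_adj[OF adj_carrier[OF X] v mult_mat_vec_carrier[OF X v]] by simp
  finally show ?thesis .
qed

lemma quad_forms:
  assumes X: "X \<in> carrier_mat p p" and Y: "Y \<in> carrier_mat p p" and v: "v \<in> carrier_vec p"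
  shows "conjugate v \<bullet> ((mat_adjoint X * X + mat_adjoint Y * Y) *\<^sub>v v) = ipr (stack p X Y *\<^sub>v v) (stack p X Y *\<^sub>v v)"
    and "conjugate v \<bullet> ((mat_adjoint Y * Y - mat_adjoint X * X) *\<^sub>v v) = - jq p (stack p X Y *\<^sub>v v)"
proof -
  have XX: "mat_adjoint X * X \<in> carrier_mat p p" and YY: "mat_adjoint Y * Y \<in> carrier_mat p p"
    using X Y by (simp_all add: mult_carrier_mat[OF adj_carrier])
  have Xv: "X *\<^sub>v v \<in> carrier_vec p" and Yv: "Y *\<^sub>v v \<in> carrier_vec p" using X Y v by simp_all
  have sv: "stack p X Y *\<^sub>v v \<in> carrier_vec (2*p)" by (rule mult_mat_vec_carrier[OF stack_carrier v])
  have cv: "conjugate v \<in> carrier_vec p" using v by simp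
  let ?s = "stack p X Y *\<^sub>v v"
  have ds: "dim_vec ?s = 2*p" "dim_vec (X *\<^sub>v v) = p" "dim_vec (Y *\<^sub>v v) = p" using sv Xv Yv X Y by auto
  have sl: "?s $ l = (X *\<^sub>v v) $ l" "?s $ (l+p) = (Y *\<^sub>v v) $ l" if "l < p" for l
    using stack_vec[OF X Y v, of l] stack_vec[OF X Y v, of "l+p"] that by simp_all
  have s1: "ipr ?s ?s = ipr (X *\<^sub>v v) (X *\<^sub>v v) + ipr (Y *\<^sub>v v) (Y *\<^sub>v v)"
  proof -
    have "ipr ?s ?s = (\<Sum>l<2*p. cnj (?s $ l) * ?s $ l)" by (rule ipr_sum[OF ds(1) ds(1)])
    also have "\<dots> = (\<Sum>l<p. cnj (?s $ l) * ?s $ l) + (\<Sum>l<p. cnj (?s $ (l+p)) * ?s $ (l+p))" by (rule sum2)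
    also have "(\<Sum>l<p. cnj (?s $ l) * ?s $ l) = ipr (X *\<^sub>v v) (X *\<^sub>v v)"
      unfolding ipr_sum[OF ds(2) ds(2)] by (rule sum.cong) (simp_all del: index_mult_mat_vec add: sl)
    also have "(\<Sum>l<p. cnj (?s $ (l+p)) * ?s $ (l+p)) = ipr (Y *\<^sub>v v) (Y *\<^sub>v v)"
      unfolding ipr_sum[OF ds(3) ds(3)] by (rule sum.cong) (simp_all del: index_mult_mat_vec add: sl)
    finally show ?thesis .
  qed
  have dj: "dim_vec (jmat p *\<^sub>v ?s) = 2*p" by simp
  have jsv: "(jmat p *\<^sub>v ?s) $ l = (if l < p then 1 else -1) * ?s $ l" if l: "l < 2*p" for l
  proof -
    have "(jmat p *\<^sub>v ?s) $ l = (\<Sum>m\<in>{0..<2*p}. jmat p $$ (l,m) * ?s $ m)"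
      using l ds by (simp add: scalar_prod_def)
    also have "\<dots> = (\<Sum>m\<in>{0..<2*p}. (if m = l then (if l < p then 1 else -1) * ?s $ l else 0))"
      by (rule sum.cong) (use l in \<open>auto simp: jmat_def\<close>)
    also have "\<dots> = (if l < p then 1 else -1) * ?s $ l" using l by (simp add: sum.delta')
    finally show ?thesis .
  qed
  have s2: "jq p ?s = ipr (X *\<^sub>v v) (X *\<^sub>v v) - ipr (Y *\<^sub>v v) (Y *\<^sub>v v)"
  proof -
    have "jq p ?s = (\<Sum>l<2*p. cnj (?s $ l) * (jmat p *\<^sub>v ?s) $ l)" unfolding jq_def by (rule ipr_sum[OF ds(1) dj])
    also have "\<dots> = (\<Sum>l<p. cnj (?s $ l) * (jmat p *\<^sub>v ?s) $ l) + (\<Sum>l<p. cnj (?s $ (l+p)) * (jmat p *\<^sub>v ?s) $ (l+p))" by (rule sum2)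
    also have "(\<Sum>l<p. cnj (?s $ l) * (jmat p *\<^sub>v ?s) $ l) = ipr (X *\<^sub>v v) (X *\<^sub>v v)"
      unfolding ipr_sum[OF ds(2) ds(2)] by (rule sum.cong) (simp_all del: index_mult_mat_vec add: sl jsv)
    also have "(\<Sum>l<p. cnj (?s $ (l+p)) * (jmat p *\<^sub>v ?s) $ (l+p)) = - ipr (Y *\<^sub>v v) (Y *\<^sub>v v)"
      unfolding ipr_sum[OF ds(3) ds(3)] sum_negf[symmetric] by (rule sum.cong) (simp_all del: index_mult_mat_vec add: sl jsv)
    finally show ?thesis by simp
  qed
  show "conjugate v \<bullet> ((mat_adjoint X * X + mat_adjoint Y * Y) *\<^sub>v v) = ipr (stack p X Y *\<^sub>v v) (stack p X Y *\<^sub>v v)"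
    unfolding s1 add_mult_distrib_mat_vec[OF XX YY v] scalar_prod_add_distrib[OF cv mult_mat_vec_carrier[OF XX v] mult_mat_vec_carrier[OF YY v]]
      ipr_adjmult[OF X v] ipr_adjmult[OF Y v] ..
  show "conjugate v \<bullet> ((mat_adjoint Y * Y - mat_adjoint X * X) *\<^sub>v v) = - jq p (stack p X Y *\<^sub>v v)"
    unfolding s2 minus_mult_distrib_mat_vec[OF YY XX v] scalar_prod_minus_distrib[OF cv mult_mat_vec_carrier[OF YY v] mult_mat_vec_carrier[OF XX v]]
      ipr_adjmult[OF X v] ipr_adjmult[OF Y v] by simp
qed

lemma Prm_dims[simp]: "dim_row (Prm p \<beta> a n z) = 2*p" "dim_col (Prm p \<beta> a n z) = 2*p"
  using carrier_matD[OF Prm_carrier[of p \<beta> a n z]] by simp_all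

lemma WW_carrier[simp]: "WW p \<beta> L z \<in> carrier_mat (2*p) (2*p)"
  unfolding WW_def by (rule mult_carrier_mat[OF K_carrier adj_carrier[OF Wsol_carrier]])

lemma WWblock_eq:
  assumes X: "X \<in> carrier_mat p p" and Y: "Y \<in> carrier_mat p p"
  shows "WWblock p \<beta> L 1 1 z * X + WWblock p \<beta> L 1 2 z * Y = mat p p (\<lambda>(a,b). (WW p \<beta> L z * stack p X Y) $$ (a,b))"
    and "WWblock p \<beta> L 2 1 z * X + WWblock p \<beta> L 2 2 z * Y = mat p p (\<lambda>(a,b). (WW p \<beta> L z * stack p X Y) $$ (a+p,b))"
  unfolding WWblock_def using blocks[OF WW_carrier X Y] by simp_all

lemma WW_eq:
  assumes b: "\<And>k. k \<le> L \<Longrightarrow> \<beta> k \<in> carrier_mat p (2*p)"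
  shows "WW p \<beta> L z = Kmat p * Prm p \<beta> 0 (Suc L) z"
  unfolding WW_def by (subst adj_Wsol) (use b in auto)

lemma WW_split:
  assumes b: "\<And>k. k \<le> N \<Longrightarrow> \<beta> k \<in> carrier_mat p (2*p)" and MN: "M < N"
  shows "WW p \<beta> N z = WW p \<beta> M z * Prm p \<beta> (Suc M) (N - M) z"
proof -
  have "Prm p \<beta> 0 (Suc N) z = Prm p \<beta> 0 (Suc M + (N - M)) z" using MN by simp
  also have "\<dots> = Prm p \<beta> 0 (Suc M) z * Prm p \<beta> (Suc M) (N - M) z" by (simp only: Prm_add add_0)
  finally have e: "Prm p \<beta> 0 (Suc N) z = Prm p \<beta> 0 (Suc M) z * Prm p \<beta> (Suc M) (N - M) z" .
  have "WW p \<beta> N z = Kmat p * (Prm p \<beta> 0 (Suc M) z * Prm p \<beta> (Suc M) (N - M) z)"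
  proof -
    have "WW p \<beta> N z = Kmat p * Prm p \<beta> 0 (Suc N) z" by (rule WW_eq) (rule b)
    thus ?thesis unfolding e .
  qed
  also have "\<dots> = Kmat p * Prm p \<beta> 0 (Suc M) z * Prm p \<beta> (Suc M) (N - M) z"
    by (rule assoc_mult_mat[OF K_carrier Prm_carrier Prm_carrier, symmetric])
  also have "Kmat p * Prm p \<beta> 0 (Suc M) z = WW p \<beta> M z"
    by (rule WW_eq[symmetric]) (use b MN in auto)
  finally show ?thesis .
qed

lemma pointwise_new:
  assumes b: "\<And>k. a \<le> k \<Longrightarrow> k < a + n \<Longrightarrow> \<beta> k \<in> carrier_mat p (2*p)"
    and bJ: "\<And>k. a \<le> k \<Longrightarrow> k < a + n \<Longrightarrow> \<beta> k * Jmat p * mat_adjoint (\<beta> k) = 1\<^sub>m p"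
    and z: "Im z < 0"
    and X: "X \<in> carrier_mat p p" and Y: "Y \<in> carrier_mat p p"
    and X1: "X1 \<in> carrier_mat p p" and Y1: "Y1 \<in> carrier_mat p p"
    and st: "stack p X1 Y1 = Prm p \<beta> a n z * stack p X Y"
    and pd: "pos_def_mat p (mat_adjoint X * X + mat_adjoint Y * Y)"
    and psd: "pos_semidef_mat p (mat_adjoint Y * Y - mat_adjoint X * X)"
  shows "pos_def_mat p (mat_adjoint X1 * X1 + mat_adjoint Y1 * Y1) \<and>
         pos_semidef_mat p (mat_adjoint Y1 * Y1 - mat_adjoint X1 * X1)"
proof -
  have XX1: "mat_adjoint X1 * X1 \<in> carrier_mat p p" by (rule mult_carrier_mat[OF adj_carrier[OF X1] X1])
  have YY1: "mat_adjoint Y1 * Y1 \<in> carrier_mat p p" by (rule mult_carrier_mat[OF adj_carrier[OF Y1] Y1])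
  have h1: "mat_adjoint (mat_adjoint X1 * X1) = mat_adjoint X1 * X1"
    by (subst adj_mult[OF adj_carrier[OF X1] X1]) simp
  have h2: "mat_adjoint (mat_adjoint Y1 * Y1) = mat_adjoint Y1 * Y1"
    by (subst adj_mult[OF adj_carrier[OF Y1] Y1]) simp
  have key: "Re (ipr (stack p X1 Y1 *\<^sub>v v) (stack p X1 Y1 *\<^sub>v v)) > 0 \<and> jn p (stack p X1 Y1 *\<^sub>v v) \<le> 0"
    if v: "v \<in> carrier_vec p" "v \<noteq> 0\<^sub>v p" for v
  proof -
    define x where "x = stack p X Y *\<^sub>v v"
    have x: "x \<in> carrier_vec (2*p)" unfolding x_def by (rule mult_mat_vec_carrier[OF stack_carrier v(1)])
    have e: "stack p X1 Y1 *\<^sub>v v = Prm p \<beta> a n z *\<^sub>v x"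
      unfolding st x_def by (rule assoc_mult_mat_vec[OF Prm_carrier stack_carrier v(1)])
    have "Re (conjugate v \<bullet> ((mat_adjoint X * X + mat_adjoint Y * Y) *\<^sub>v v)) > 0"
      using pd v unfolding pos_def_mat_def by blast
    hence px: "Re (ipr x x) > 0" unfolding quad_forms(1)[OF X Y v(1)] x_def .
    have "Re (conjugate v \<bullet> ((mat_adjoint Y * Y - mat_adjoint X * X) *\<^sub>v v)) \<ge> 0"
      using psd v unfolding pos_semidef_mat_def by blast
    hence cx: "jn p x \<le> 0" unfolding quad_forms(2)[OF X Y v(1)] x_def jn_def by simp
    have x0: "x \<noteq> 0\<^sub>v (2*p)"
    proof
      assume "x = 0\<^sub>v (2*p)"
      hence "ipr x x = 0" using ipr_zero1[of "0\<^sub>v (2*p)" "2*p"] by simp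
      with px show False by simp
    qed
    have c: "jn p (Prm p \<beta> a n z *\<^sub>v x) \<le> 0 \<and> Prm p \<beta> a n z *\<^sub>v x \<noteq> 0\<^sub>v (2*p)"
      by (rule cone_Prm[OF b bJ z x cx x0])
    have Px: "Prm p \<beta> a n z *\<^sub>v x \<in> carrier_vec (2*p)" by (rule mult_mat_vec_carrier[OF Prm_carrier x])
    have "Re (ipr (Prm p \<beta> a n z *\<^sub>v x) (Prm p \<beta> a n z *\<^sub>v x)) \<noteq> 0"
      using ipr_self_zero[of "Prm p \<beta> a n z *\<^sub>v x"] c Px by auto
    hence "Re (ipr (Prm p \<beta> a n z *\<^sub>v x) (Prm p \<beta> a n z *\<^sub>v x)) > 0"
      using ipr_self_ge[of "Prm p \<beta> a n z *\<^sub>v x"] by linarith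
    thus ?thesis unfolding e using c by simp
  qed
  have key0: "jn p (stack p X1 Y1 *\<^sub>v v) \<le> 0" if v: "v \<in> carrier_vec p" for v
  proof (cases "v = 0\<^sub>v p")
    case True
    have "stack p X1 Y1 *\<^sub>v v = 0\<^sub>v (2*p)" unfolding True by (intro eq_vecI) simp_all
    thus ?thesis unfolding jn_def using jq_zero[of p] by simp
  next
    case False thus ?thesis using key[OF v False] by simp
  qed
  show ?thesis
  proof
    show "pos_def_mat p (mat_adjoint X1 * X1 + mat_adjoint Y1 * Y1)"
      unfolding pos_def_mat_def
    proof (intro conjI ballI impI)
      show "mat_adjoint X1 * X1 + mat_adjoint Y1 * Y1 \<in> carrier_mat p p" by (rule add_carrier_mat[OF YY1])
      show "mat_adjoint (mat_adjoint X1 * X1 + mat_adjoint Y1 * Y1) = mat_adjoint X1 * X1 + mat_adjoint Y1 * Y1"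
        unfolding adj_add[OF XX1 YY1] h1 h2 ..
      fix v :: "complex vec" assume v: "v \<in> carrier_vec p" "v \<noteq> 0\<^sub>v p"
      show "Re (conjugate v \<bullet> ((mat_adjoint X1 * X1 + mat_adjoint Y1 * Y1) *\<^sub>v v)) > 0"
        unfolding quad_forms(1)[OF X1 Y1 v(1)] using key[OF v] by simp
    qed
    show "pos_semidef_mat p (mat_adjoint Y1 * Y1 - mat_adjoint X1 * X1)"
      unfolding pos_semidef_mat_def
    proof (intro conjI ballI)
      show "mat_adjoint Y1 * Y1 - mat_adjoint X1 * X1 \<in> carrier_mat p p" by (rule minus_carrier_mat[OF XX1])
      show "mat_adjoint (mat_adjoint Y1 * Y1 - mat_adjoint X1 * X1) = mat_adjoint Y1 * Y1 - mat_adjoint X1 * X1"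
        unfolding adj_minus[OF YY1 XX1] h1 h2 ..
      fix v :: "complex vec" assume v: "v \<in> carrier_vec p"
      show "Re (conjugate v \<bullet> ((mat_adjoint Y1 * Y1 - mat_adjoint X1 * X1) *\<^sub>v v)) \<ge> 0"
        unfolding quad_forms(2)[OF X1 Y1 v] using key0[OF v] by (simp add: jn_def)
    qed
  qed
qed

lemma not_pole_if_tendsto: "(f \<longlongrightarrow> c) (at z) \<Longrightarrow> \<not> is_pole f (z::complex)"
  unfolding is_pole_def using not_tendsto_and_filterlim_at_infinity[OF at_neq_bot] by blast

lemma open_LHP: "open lower_half_plane"
  unfolding lower_half_plane_def by (rule open_halfspace_Im_lt)

lemma LHP_sub: "lower_half_plane \<subseteq> - {0}"
  unfolding lower_half_plane_def by auto

lemma mi_LHP: "- \<i> \<in> lower_half_plane"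
  unfolding lower_half_plane_def by simp

theorem proposition5p7:
  fixes p N M :: nat and \<beta> :: "nat \<Rightarrow> complex mat"
  assumes "p \<ge> 1" and "M < N"
    and "\<And>k. k \<le> N \<Longrightarrow> \<beta> k \<in> carrier_mat p (2*p)"
    and "\<And>k. k \<le> N \<Longrightarrow> \<beta> k * Jmat p * mat_adjoint (\<beta> k) = 1\<^sub>m p"
  shows "WeylSet p \<beta> N \<subseteq> WeylSet p \<beta> M"
proof
  note MN = assms(2) and bN = assms(3) and bJN = assms(4)
  fix \<phi> assume "\<phi> \<in> WeylSet p \<beta> N"
  then obtain R Q where hol: "mat_holomorphic_on p \<phi> lower_half_plane"
    and Rm: "mat_meromorphic_on p R lower_half_plane" and Qm: "mat_meromorphic_on p Q lower_half_plane"
    and Rd: "mat_defined_at p R (-\<i>)" and Qd: "mat_defined_at p Q (-\<i>)"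
    and pw: "\<forall>z\<in>lower_half_plane. mat_defined_at p R z \<and> mat_defined_at p Q z \<longrightarrow>
            pos_def_mat p (mat_adjoint (R z) * R z + mat_adjoint (Q z) * Q z) \<and>
            pos_semidef_mat p (mat_adjoint (Q z) * Q z - mat_adjoint (R z) * R z)"
    and ev: "\<forall>\<^sub>\<approx>z\<in>lower_half_plane.
            invertible_mat (WWblock p \<beta> N 1 1 z * R z + WWblock p \<beta> N 1 2 z * Q z) \<and>
            \<phi> z = \<i> \<cdot>\<^sub>m (WWblock p \<beta> N 2 1 z * R z + WWblock p \<beta> N 2 2 z * Q z) *
                   the (mat_inverse (WWblock p \<beta> N 1 1 z * R z + WWblock p \<beta> N 1 2 z * Q z))"
    unfolding WeylSet_def by blast
  let ?L = "lower_half_plane"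
  define n where "n = N - M"
  define U where "U = (\<lambda>z. Prm p \<beta> (Suc M) n z)"
  define V where "V = (\<lambda>z. Pim p \<beta> (Suc M) n z)"
  define S where "S = (\<lambda>z. stack p (R z) (Q z))"
  define F where "F = (\<lambda>a b z. (U z * S z) $$ (a,b))"
  define R' where "R' = (\<lambda>z. mat p p (\<lambda>(a,b). remove_sings (F a b) z))"
  define Q' where "Q' = (\<lambda>z. mat p p (\<lambda>(a,b). remove_sings (F (a+p) b) z))"
  define good where "good = (\<lambda>z. mat_defined_at p R z \<and> mat_defined_at p Q z)"
  have bk: "\<And>k. Suc M \<le> k \<Longrightarrow> k < Suc M + n \<Longrightarrow> \<beta> k \<in> carrier_mat p (2*p)"
    using bN MN unfolding n_def by simp
  have bJk: "\<And>k. Suc M \<le> k \<Longrightarrow> k < Suc M + n \<Longrightarrow> \<beta> k * Jmat p * mat_adjoint (\<beta> k) = 1\<^sub>m p"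
    using bJN MN unfolding n_def by simp
  have Rc: "R z \<in> carrier_mat p p" and Qc: "Q z \<in> carrier_mat p p" if "z \<in> ?L" for z
    using Rm Qm that unfolding mat_meromorphic_on_def by blast+
  have Rent: "(\<lambda>z. R z $$ (a,b)) nicely_meromorphic_on ?L" and Qent: "(\<lambda>z. Q z $$ (a,b)) nicely_meromorphic_on ?L"
    if "a < p" "b < p" for a b
    using Rm Qm that unfolding mat_meromorphic_on_def by blast+
  have Uan: "(\<lambda>z. U z $$ (i,j)) analytic_on ?L" if "i < 2*p" "j < 2*p" for i j
    unfolding U_def analytic_on_open[OF open_LHP]
    by (rule holomorphic_on_subset[OF Prm_holo[OF that] LHP_sub])
  have Van: "(\<lambda>z. V z $$ (i,j)) analytic_on ?L" if "i < 2*p" "j < 2*p" for i j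
    unfolding V_def analytic_on_open[OF open_LHP]
    by (rule holomorphic_on_subset[OF Pim_holo[OF that] LHP_sub])
  have Sfun: "(\<lambda>z. S z $$ (l,b)) = (if l < p then (\<lambda>z. R z $$ (l,b)) else (\<lambda>z. Q z $$ (l-p,b)))"
    if "l < 2*p" "b < p" for l b
    using that by (auto simp: S_def stack_idx)
  have Smero: "(\<lambda>z. S z $$ (l,b)) meromorphic_on ?L" if "l < 2*p" "b < p" for l b
    unfolding Sfun[OF that] using Rent Qent that unfolding nicely_meromorphic_on_def by auto
  have Fsum: "F a b = (\<lambda>z. \<Sum>m<2*p. U z $$ (a,m) * S z $$ (m,b))" if "a < 2*p" "b < p" for a b
    unfolding F_def U_def S_def using that by (intro ext mult_idx_sum[OF Prm_carrier stack_carrier])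
  have Fmero: "F a b meromorphic_on ?L" if "a < 2*p" "b < p" for a b
    unfolding Fsum[OF that]
    by (intro meromorphic_on_sum meromorphic_on_mult analytic_on_imp_meromorphic_on Uan Smero) (use that in auto)
  have Sgood: "(\<lambda>w. S w $$ (l,b)) analytic_on {z}" if "z \<in> ?L" "good z" "l < 2*p" "b < p" for z l b
  proof (cases "l < p")
    case True
    have "(\<lambda>w. R w $$ (l,b)) analytic_on {z}"
      by (rule nicely_meromorphic_on_imp_analytic_at[OF Rent[OF True that(4)] that(1)])
         (use that True in \<open>auto simp: good_def mat_defined_at_def\<close>)
    thus ?thesis unfolding Sfun[OF that(3,4)] using True by simp
  next
    case False
    hence lp: "l - p < p" using that by simp
    have "(\<lambda>w. Q w $$ (l-p,b)) analytic_on {z}"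
      by (rule nicely_meromorphic_on_imp_analytic_at[OF Qent[OF lp that(4)] that(1)])
         (use that lp in \<open>auto simp: good_def mat_defined_at_def\<close>)
    thus ?thesis unfolding Sfun[OF that(3,4)] using False by simp
  qed
  have Fgood: "F a b analytic_on {z}" if "z \<in> ?L" "good z" "a < 2*p" "b < p" for z a b
    unfolding Fsum[OF that(3,4)]
    by (intro analytic_on_sum analytic_on_mult analytic_on_subset[OF Uan] Sgood) (use that in auto)
  have rsF: "remove_sings (F a b) z = F a b z" if "z \<in> ?L" "good z" "a < 2*p" "b < p" for z a b
    by (rule remove_sings_at_analytic[OF Fgood[OF that]])
  have stackgood: "stack p (R' z) (Q' z) = U z * S z" if "z \<in> ?L" "good z" for z
  proof (rule eq_matI)
    fix l b assume "l < dim_row (U z * S z)" "b < dim_col (U z * S z)"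
    hence l: "l < 2*p" and b: "b < p" by (simp_all add: U_def S_def)
    show "stack p (R' z) (Q' z) $$ (l,b) = (U z * S z) $$ (l,b)"
    proof (cases "l < p")
      case True thus ?thesis using l b rsF[OF that l b] by (simp add: stack_idx R'_def F_def)
    next
      case False
      hence "l - p + p = l" by simp
      thus ?thesis using False l b rsF[OF that l b] by (simp add: stack_idx Q'_def F_def)
    qed
  qed (simp_all add: U_def S_def)
  have goodev: "eventually good (cosparse ?L)"
  proof -
    have "eventually (\<lambda>z. \<forall>a\<in>{..<p}. \<forall>b\<in>{..<p}. \<not> is_pole (\<lambda>w. R w $$ (a,b)) z \<and> \<not> is_pole (\<lambda>w. Q w $$ (a,b)) z) (cosparse ?L)"
    proof (intro eventually_ball_finite ballI finite_lessThan)
      fix a b assume "a \<in> {..<p}" "b \<in> {..<p}"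
      hence ab: "a < p" "b < p" by auto
      show "eventually (\<lambda>z. \<not> is_pole (\<lambda>w. R w $$ (a,b)) z \<and> \<not> is_pole (\<lambda>w. Q w $$ (a,b)) z) (cosparse ?L)"
        using meromorphic_on_imp_not_pole_cosparse[of "\<lambda>w. R w $$ (a,b)" ?L]
              meromorphic_on_imp_not_pole_cosparse[of "\<lambda>w. Q w $$ (a,b)" ?L]
              Rent[OF ab] Qent[OF ab]
        unfolding nicely_meromorphic_on_def by (simp add: eventually_conj_iff)
    qed
    thus ?thesis by eventually_elim (auto simp: good_def mat_defined_at_def)
  qed
  have R'ent: "(\<lambda>z. R' z $$ (a,b)) = remove_sings (F a b)" if "a < p" "b < p" for a b
    using that by (auto simp: R'_def)
  have Q'ent: "(\<lambda>z. Q' z $$ (a,b)) = remove_sings (F (a+p) b)" if "a < p" "b < p" for a b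
    using that by (auto simp: Q'_def)
  have R'm: "mat_meromorphic_on p R' ?L"
    unfolding mat_meromorphic_on_def
  proof (intro conjI ballI allI impI)
    fix a b assume ab: "a < p" "b < p"
    show "(\<lambda>z. R' z $$ (a,b)) nicely_meromorphic_on ?L"
      unfolding R'ent[OF ab] by (rule remove_sings_nicely_meromorphic[OF Fmero]) (use ab in auto)
  qed (simp add: R'_def)
  have Q'm: "mat_meromorphic_on p Q' ?L"
    unfolding mat_meromorphic_on_def
  proof (intro conjI ballI allI impI)
    fix a b assume ab: "a < p" "b < p"
    show "(\<lambda>z. Q' z $$ (a,b)) nicely_meromorphic_on ?L"
      unfolding Q'ent[OF ab] by (rule remove_sings_nicely_meromorphic[OF Fmero]) (use ab in auto)
  qed (simp add: Q'_def)
  have isoF: "isolated_singularity_at (F a b) z" if "z \<in> ?L" "a < 2*p" "b < p" for z a b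
    by (rule meromorphic_on_isolated_singularity[OF meromorphic_on_subset[OF Fmero[OF that(2,3)]]]) (use that in auto)
  have npgood: "\<not> is_pole (remove_sings (F a b)) z" if "z \<in> ?L" "good z" "a < 2*p" "b < p" for z a b
    unfolding is_pole_remove_sings_iff[OF isoF[OF that(1,3,4)]]
    by (rule analytic_at_imp_no_pole[OF Fgood[OF that]])
  have defgood: "mat_defined_at p R' z \<and> mat_defined_at p Q' z" if "z \<in> ?L" "good z" for z
    unfolding mat_defined_at_def using R'ent Q'ent npgood[OF that] by auto
  have mi_good: "good (-\<i>)" unfolding good_def using Rd Qd by simp
  have goodL: "good z" if zL: "z \<in> ?L" and dR: "mat_defined_at p R' z" and dQ: "mat_defined_at p Q' z" for z
  proof (cases "z = -\<i>")
    case True thus ?thesis using mi_good by simp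
  next
    case False
    define G where "G = (\<lambda>m b. remove_sings (F m b))"
    define d where "d = (\<lambda>w::complex. (1 - (\<i>/w)^2)^n)"
    have Gnp: "\<not> is_pole (G m b) z" if "m < 2*p" "b < p" for m b
    proof (cases "m < p")
      case True thus ?thesis using dR that unfolding mat_defined_at_def G_def R'ent[OF True that(2), symmetric] by blast
    next
      case False
      hence mp: "m - p < p" "m - p + p = m" using that by auto
      show ?thesis using dQ that mp unfolding mat_defined_at_def G_def using Q'ent[OF mp(1) that(2)] by fastforce
    qed
    have Gt: "(G m b \<longlongrightarrow> G m b z) (at z)" if "m < 2*p" "b < p" for m b
    proof -
      have "G m b nicely_meromorphic_on ?L" unfolding G_def
        by (rule remove_sings_nicely_meromorphic[OF Fmero[OF that]])
      thus ?thesis using Gnp[OF that] zL unfolding nicely_meromorphic_on_def by blast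
    qed
    have z0: "z \<noteq> 0" using zL LHP_sub by auto
    have zi: "z \<noteq> \<i>" using zL unfolding lower_half_plane_def by auto
    have dz: "d z \<noteq> 0"
    proof
      assume "d z = 0"
      hence "(\<i>/z)^2 = 1" unfolding d_def by simp
      hence "\<i>/z = 1 \<or> \<i>/z = -1" by (simp add: power2_eq_1_iff)
      moreover have "z = \<i>" if "\<i>/z = 1" using that z0 by (simp add: divide_eq_eq)
      moreover have "z = -\<i>" if "\<i>/z = -1"
      proof -
        have "\<i> = - z" using that z0 by (simp add: divide_eq_eq)
        thus ?thesis by (metis minus_minus)
      qed
      ultimately have "z = \<i> \<or> z = -\<i>" by blast
      with zi False show False by blast
    qed
    have dt: "(d \<longlongrightarrow> d z) (at z)"
      unfolding d_def using z0 by (intro tendsto_intros) auto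
    have Vt: "((\<lambda>w. V w $$ (l,m)) \<longlongrightarrow> V z $$ (l,m)) (at z)" if "l < 2*p" "m < 2*p" for l m
      using analytic_at_imp_isCont[OF analytic_on_subset[OF Van[OF that]]] zL
      by (simp add: isCont_def)
    have evw: "eventually (\<lambda>w. good w \<and> w \<in> ?L \<and> d w \<noteq> 0) (at z)"
    proof -
      have "eventually good (at z within UNIV)" by (rule eventually_cosparse_imp_eventually_at[OF goodev zL])
      moreover have "eventually (\<lambda>w. w \<in> ?L) (at z)" by (rule eventually_at_in_open'[OF open_LHP zL])
      moreover have "eventually (\<lambda>w. d w \<noteq> 0) (at z)" by (rule tendsto_imp_eventually_ne[OF dt dz])
      ultimately show ?thesis by eventually_elim auto
    qed
    have Seq: "S w $$ (l,b) = (\<Sum>m<2*p. V w $$ (l,m) * G m b w) / d w"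
      if w: "good w" "w \<in> ?L" "d w \<noteq> 0" and lb: "l < 2*p" "b < p" for w l b
    proof -
      have VU: "V w * U w = d w \<cdot>\<^sub>m 1\<^sub>m (2*p)"
        unfolding V_def U_def d_def by (rule Pim_Prm[OF bk bJk])
      have "V w * (U w * S w) = (V w * U w) * S w"
        unfolding V_def U_def S_def by (rule assoc_mult_mat[OF Pim_carrier Prm_carrier stack_carrier, symmetric])
      also have "\<dots> = d w \<cdot>\<^sub>m S w" unfolding VU S_def
        by (simp add: mult_smult_assoc_mat[OF one_carrier_mat stack_carrier] left_mult_one_mat[OF stack_carrier])
      finally have e: "V w * (U w * S w) = d w \<cdot>\<^sub>m S w" .
      have "(V w * (U w * S w)) $$ (l,b) = (\<Sum>m<2*p. V w $$ (l,m) * (U w * S w) $$ (m,b))"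
        unfolding V_def U_def S_def
        by (rule mult_idx_sum[OF Pim_carrier mult_carrier_mat[OF Prm_carrier stack_carrier] lb])
      also have "\<dots> = (\<Sum>m<2*p. V w $$ (l,m) * G m b w)"
        by (rule sum.cong) (use rsF[OF w(2,1) _ lb(2)] in \<open>auto simp: G_def F_def\<close>)
      finally have "d w * S w $$ (l,b) = (\<Sum>m<2*p. V w $$ (l,m) * G m b w)"
        unfolding e using lb by (simp add: S_def)
      thus ?thesis using w(3) by (simp add: field_simps)
    qed
    have Snp: "\<not> is_pole (\<lambda>w. S w $$ (l,b)) z" if lb: "l < 2*p" "b < p" for l b
    proof (rule not_pole_if_tendsto)
      have "((\<lambda>w. (\<Sum>m<2*p. V w $$ (l,m) * G m b w) / d w) \<longlongrightarrow> (\<Sum>m<2*p. V z $$ (l,m) * G m b z) / d z) (at z)"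
        by (intro tendsto_divide tendsto_sum tendsto_mult Vt Gt dt dz) (use lb in auto)
      moreover have "eventually (\<lambda>w. (\<Sum>m<2*p. V w $$ (l,m) * G m b w) / d w = S w $$ (l,b)) (at z)"
        using evw by eventually_elim (use Seq lb in auto)
      ultimately show "((\<lambda>w. S w $$ (l,b)) \<longlongrightarrow> (\<Sum>m<2*p. V z $$ (l,m) * G m b z) / d z) (at z)"
        by (rule Lim_transform_eventually)
    qed
    show "good z" unfolding good_def mat_defined_at_def
    proof (intro conjI allI impI)
      fix a b assume ab: "a < p" "b < p"
      show "\<not> is_pole (\<lambda>w. R w $$ (a,b)) z" using Snp[of a b] Sfun[of a b] ab by simp
      have "a + p < 2*p" "\<not> a + p < p" using ab by auto
      thus "\<not> is_pole (\<lambda>w. Q w $$ (a,b)) z" using Snp[of "a+p" b] Sfun[of "a+p" b] ab by simp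
    qed
  qed
  have pw': "pos_def_mat p (mat_adjoint (R' z) * R' z + mat_adjoint (Q' z) * Q' z) \<and>
            pos_semidef_mat p (mat_adjoint (Q' z) * Q' z - mat_adjoint (R' z) * R' z)"
    if zL: "z \<in> ?L" and dd: "mat_defined_at p R' z \<and> mat_defined_at p Q' z" for z
  proof -
    have g: "good z" using goodL[OF zL] dd by blast
    have "pos_def_mat p (mat_adjoint (R z) * R z + mat_adjoint (Q z) * Q z) \<and>
            pos_semidef_mat p (mat_adjoint (Q z) * Q z - mat_adjoint (R z) * R z)"
      using pw zL g unfolding good_def by blast
    thus ?thesis
      by (intro pointwise_new[OF bk bJk _ Rc[OF zL] Qc[OF zL]])
         (use zL stackgood[OF zL g] in \<open>auto simp: lower_half_plane_def R'_def Q'_def U_def S_def\<close>)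
  qed
  have ev': "\<forall>\<^sub>\<approx>z\<in>lower_half_plane.
            invertible_mat (WWblock p \<beta> M 1 1 z * R' z + WWblock p \<beta> M 1 2 z * Q' z) \<and>
            \<phi> z = \<i> \<cdot>\<^sub>m (WWblock p \<beta> M 2 1 z * R' z + WWblock p \<beta> M 2 2 z * Q' z) *
                   the (mat_inverse (WWblock p \<beta> M 1 1 z * R' z + WWblock p \<beta> M 1 2 z * Q' z))"
  proof -
    have "eventually (\<lambda>z. z \<in> ?L) (cosparse ?L)" by (rule eventually_in_cosparse[OF order_refl open_LHP])
    with goodev ev show ?thesis
    proof eventually_elim
      case (elim z)
      hence zL: "z \<in> ?L" and g: "good z" by auto
      have R'c: "R' z \<in> carrier_mat p p" and Q'c: "Q' z \<in> carrier_mat p p" by (simp_all add: R'_def Q'_def)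
      have WS: "WW p \<beta> N z * S z = WW p \<beta> M z * stack p (R' z) (Q' z)"
      proof -
        have sp: "WW p \<beta> N z = WW p \<beta> M z * Prm p \<beta> (Suc M) (N - M) z"
          by (rule WW_split) (use bN MN in auto)
        have "WW p \<beta> N z * S z = WW p \<beta> M z * U z * S z"
          unfolding sp U_def n_def ..
        also have "\<dots> = WW p \<beta> M z * (U z * S z)"
          unfolding U_def S_def by (rule assoc_mult_mat[OF WW_carrier Prm_carrier stack_carrier])
        finally show ?thesis unfolding stackgood[OF zL g] .
      qed
      have e1: "WWblock p \<beta> N 1 1 z * R z + WWblock p \<beta> N 1 2 z * Q z = WWblock p \<beta> M 1 1 z * R' z + WWblock p \<beta> M 1 2 z * Q' z"
        unfolding WWblock_eq(1)[OF Rc[OF zL] Qc[OF zL]] WWblock_eq(1)[OF R'c Q'c] WS[unfolded S_def] ..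
      have e2: "WWblock p \<beta> N 2 1 z * R z + WWblock p \<beta> N 2 2 z * Q z = WWblock p \<beta> M 2 1 z * R' z + WWblock p \<beta> M 2 2 z * Q' z"
        unfolding WWblock_eq(2)[OF Rc[OF zL] Qc[OF zL]] WWblock_eq(2)[OF R'c Q'c] WS[unfolded S_def] ..
      show ?case using elim unfolding e1 e2 by blast
    qed
  qed
  have R'd: "mat_defined_at p R' (-\<i>)" and Q'd: "mat_defined_at p Q' (-\<i>)"
    using defgood[OF mi_LHP mi_good] by auto
  have "mat_meromorphic_on p R' ?L \<and> mat_meromorphic_on p Q' ?L \<and>
        mat_defined_at p R' (-\<i>) \<and> mat_defined_at p Q' (-\<i>) \<and>
        (\<forall>z\<in>?L. mat_defined_at p R' z \<and> mat_defined_at p Q' z \<longrightarrow>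
            pos_def_mat p (mat_adjoint (R' z) * R' z + mat_adjoint (Q' z) * Q' z) \<and>
            pos_semidef_mat p (mat_adjoint (Q' z) * Q' z - mat_adjoint (R' z) * R' z)) \<and>
        (\<forall>\<^sub>\<approx>z\<in>lower_half_plane.
            invertible_mat (WWblock p \<beta> M 1 1 z * R' z + WWblock p \<beta> M 1 2 z * Q' z) \<and>
            \<phi> z = \<i> \<cdot>\<^sub>m (WWblock p \<beta> M 2 1 z * R' z + WWblock p \<beta> M 2 2 z * Q' z) *
                   the (mat_inverse (WWblock p \<beta> M 1 1 z * R' z + WWblock p \<beta> M 1 2 z * Q' z)))"
    using R'm Q'm R'd Q'd pw' ev' by blast
  thus "\<phi> \<in> WeylSet p \<beta> M" unfolding WeylSet_def using hol by blast
qed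

end
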